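(* Let $q$ be a prime power and let $U_1,U_2$ be subspaces of $\mathbf F_q^k$ of dimensions $u_1,u_2$ such that $U_0=U_1\cap U_2$ has dimension $u_0<\min\{u_1,u_2\}$. Let $t\ge0$ and $v_0,v_1,v_2$ be integers with $0\le v_0\le u_0$, $v_0\le v_1\le u_1$, $v_0\le v_2\le u_2$. (i) The number $N_t(u_0,u_1,u_2,v_0,v_1,v_2)$ of $(t+v_1+v_2-v_0)$-dimensional subspaces $V$ of $U_1+U_2$ with $\dim(V\cap U_0)=v_0$, $\dim(V\cap U_1)=v_1$, $\dim(V\cap U_2)=v_2$ equals $$\binom{u_0}{v_0}_q\,q^{(u_0-v_0)(t+v_1+v_2-2v_0)}\,N_t(u_1-u_0,u_2-u_0,v_1-v_0,v_2-v_0).$$ (ii) For $l\ge0$, the number $N^{k,u_0,u_1,u_2}_{l,v_0,v_1,v_2}$ of $l$-dimensional subspaces $V$ of $\mathbf F_q^k$ with $\dim(V\cap U_0)=v_0$, $\dim(V\cap U_1)=v_1$, $\dim(V\cap U_2)=v_2$ equals $$\sum_{t=0}^{t'}q^{((u_1-v_1)+(u_2-v_2)-(u_0-v_0)-t)(l-t-v_1-v_2+v_0)}\binom{k-u_1-u_2+u_0}{\,l-t-v_1-v_2+v_0\,}_q N_t(u_0,u_1,u_2,v_0,v_1,v_2),$$ where $t'=\min\{u_1-v_1,u_2-v_2\}$.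
   Context: $\binom{a}{b}_q=\prod_{i=0}^{b-1}\frac{q^a-q^i}{q^b-q^i}$ is the Gaussian binomial coefficient (the number of $b$-dimensional subspaces of $\mathbf F_q^a$), taken to be $0$ if $b<0$ or $b>a$. For integers $t,a,b,c,e\ge0$, $N_t(a,b,c,e)$ denotes the number of $(t+c+e)$-dimensional subspaces $V$ of $A\oplus B$ with $\dim(V\cap A)=c$ and $\dim(V\cap B)=e$, where $A,B$ are subspaces of some $\mathbf F_q$-vector space with $\dim A=a$, $\dim B=b$, $A\cap B=\{0\}$ (this number depends only on $q,t,a,b,c,e$). *)

theory Defs
  imports Complex_Main "HOL-Library.Cardinality" "HOL-Library.Function_Algebras"
begin

text \<open>Vectors of F_q^k are modelled as functions nat => 'a vanishing from index k on,
  where 'a is a finite field with q = CARD('a) elements.\<close>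

definition sc :: "'a::field \<Rightarrow> (nat \<Rightarrow> 'a) \<Rightarrow> (nat \<Rightarrow> 'a)" where
  "sc c v = (\<lambda>i. c * v i)"

interpretation fvs: vector_space "sc :: 'a::field \<Rightarrow> (nat \<Rightarrow> 'a) \<Rightarrow> (nat \<Rightarrow> 'a)"
  by unfold_locales (auto simp: sc_def fun_eq_iff algebra_simps)

abbreviation fsubspace :: "(nat \<Rightarrow> 'a::field) set \<Rightarrow> bool" where
  "fsubspace V \<equiv> module.subspace sc V"

abbreviation fdim :: "(nat \<Rightarrow> 'a::field) set \<Rightarrow> nat" where
  "fdim V \<equiv> vector_space.dim sc V"

definition Fk :: "nat \<Rightarrow> (nat \<Rightarrow> 'a::field) set" where
  "Fk k = {v. \<forall>i\<ge>k. v i = 0}"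

definition ssum :: "(nat \<Rightarrow> 'a::field) set \<Rightarrow> (nat \<Rightarrow> 'a) set \<Rightarrow> (nat \<Rightarrow> 'a) set" where
  "ssum A B = {x + y | x y. x \<in> A \<and> y \<in> B}"

definition gbinom :: "real \<Rightarrow> int \<Rightarrow> int \<Rightarrow> real" where
  "gbinom q a b = (if b < 0 \<or> b > a then 0
     else (\<Prod>i<nat b. (q ^ nat a - q ^ i) / (q ^ nat b - q ^ i)))"

text \<open>N_t(a,b,c,e) computed with the concrete choice A = F^a (first a coordinates),
  B = the span of coordinates a..a+b-1, so A + B = F^(a+b) and A \<inter> B = 0.\<close>
definition Nt :: "'a::{field,finite} itself \<Rightarrow> nat \<Rightarrow> nat \<Rightarrow> nat \<Rightarrow> nat \<Rightarrow> nat \<Rightarrow> nat" where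
  "Nt _ t a b c e =
     (let A = (Fk a :: (nat \<Rightarrow> 'a) set); B = {v \<in> Fk (a + b). \<forall>i<a. v i = 0} in
      card {V. fsubspace V \<and> V \<subseteq> ssum A B \<and> fdim V = t + c + e
              \<and> fdim (V \<inter> A) = c \<and> fdim (V \<inter> B) = e})"

end

theory Submission
  imports Defs "HOL-Library.FuncSet"
begin


type_synonym 'a vec = "nat \<Rightarrow> 'a"

lemma q_ge2: "CARD('a::{field,finite}) \<ge> 2"
proof -
  have "card {0::'a, 1} = 2" by simp
  moreover have "card {0::'a, 1} \<le> CARD('a)" by (rule card_mono) auto
  ultimately show ?thesis by simp
qed

lemma finite_span:
  fixes S :: "('a::{field,finite}) vec set"
  assumes "finite S" shows "finite (fvs.span S)"
proof -
  have "fvs.span S = (\<lambda>u. \<Sum>v\<in>S. sc (u v) v) ` (S \<rightarrow>\<^sub>E UNIV)"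
  proof
    show "fvs.span S \<subseteq> (\<lambda>u. \<Sum>v\<in>S. sc (u v) v) ` (S \<rightarrow>\<^sub>E UNIV)"
    proof
      fix x assume "x \<in> fvs.span S"
      then obtain u where x: "x = (\<Sum>v\<in>S. sc (u v) v)" using fvs.span_finite[OF assms] by auto
      have "x = (\<Sum>v\<in>S. sc (restrict u S v) v)" unfolding x by (rule sum.cong) auto
      moreover have "restrict u S \<in> S \<rightarrow>\<^sub>E UNIV" by auto
      ultimately show "x \<in> (\<lambda>u. \<Sum>v\<in>S. sc (u v) v) ` (S \<rightarrow>\<^sub>E UNIV)" by blast
    qed
  next
    show "(\<lambda>u. \<Sum>v\<in>S. sc (u v) v) ` (S \<rightarrow>\<^sub>E UNIV) \<subseteq> fvs.span S"
      using fvs.span_finite[OF assms] by auto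
  qed
  moreover have "finite (S \<rightarrow>\<^sub>E (UNIV::'a set))" using assms by (intro finite_PiE) auto
  ultimately show ?thesis by simp
qed

lemma card_span_indep:
  fixes B :: "('a::{field,finite}) vec set"
  assumes fin: "finite B" and ind: "fvs.independent B"
  shows "card (fvs.span B) = CARD('a) ^ card B"
proof -
  let ?f = "\<lambda>u. \<Sum>v\<in>B. sc (u v) v"
  have img: "fvs.span B = ?f ` (B \<rightarrow>\<^sub>E UNIV)"
  proof
    show "fvs.span B \<subseteq> ?f ` (B \<rightarrow>\<^sub>E UNIV)"
    proof
      fix x assume "x \<in> fvs.span B"
      then obtain u where x: "x = (\<Sum>v\<in>B. sc (u v) v)" using fvs.span_finite[OF fin] by auto
      have "x = (\<Sum>v\<in>B. sc (restrict u B v) v)" unfolding x by (rule sum.cong) auto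
      moreover have "restrict u B \<in> B \<rightarrow>\<^sub>E UNIV" by auto
      ultimately show "x \<in> ?f ` (B \<rightarrow>\<^sub>E UNIV)" by blast
    qed
  next
    show "?f ` (B \<rightarrow>\<^sub>E UNIV) \<subseteq> fvs.span B"
      using fvs.span_finite[OF fin] by auto
  qed
  have inj: "inj_on ?f (B \<rightarrow>\<^sub>E UNIV)"
  proof (rule inj_onI)
    fix u w assume u: "u \<in> B \<rightarrow>\<^sub>E UNIV" and w: "w \<in> B \<rightarrow>\<^sub>E UNIV" and eq: "?f u = ?f w"
    have "(\<Sum>v\<in>B. sc (u v - w v) v) = (\<Sum>v\<in>B. sc (u v) v - sc (w v) v)"
      by (rule sum.cong) (simp_all add: fvs.scale_left_diff_distrib)
    also have "\<dots> = ?f u - ?f w" by (rule sum_subtractf)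
    also have "\<dots> = 0" using eq by simp
    finally have z: "(\<Sum>v\<in>B. sc (u v - w v) v) = 0" .
    have "\<forall>v\<in>B. u v - w v = 0"
      using fvs.independentD[OF ind fin order_refl, of "\<lambda>v. u v - w v"] z by blast
    then show "u = w" using u w by (auto simp: PiE_def extensional_def fun_eq_iff)
  qed
  have "card (fvs.span B) = card (B \<rightarrow>\<^sub>E (UNIV::'a set))"
    unfolding img by (rule card_image[OF inj])
  also have "\<dots> = CARD('a) ^ card B" using fin by (simp add: card_PiE)
  finally show ?thesis .
qed

lemma card_span_le:
  fixes S :: "('a::{field,finite}) vec set"
  assumes "finite S"
  shows "card (fvs.span S) \<le> CARD('a) ^ card S"
proof -
  obtain B where B: "B \<subseteq> S" "fvs.independent B" "S \<subseteq> fvs.span B"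
    using fvs.maximal_independent_subset[of S] by blast
  have "fvs.span B = fvs.span S"
    using B by (metis fvs.span_mono fvs.span_span subset_antisym fvs.span_minimal fvs.subspace_span)
  moreover have "finite B" using B assms finite_subset by blast
  moreover have "card B \<le> card S" using B assms by (simp add: card_mono)
  ultimately show ?thesis using card_span_indep[of B] B
    by (metis power_increasing q_ge2 le_trans one_le_numeral)
qed

lemma card_subspace:
  fixes S :: "('a::{field,finite}) vec set"
  assumes "fsubspace S" "finite S"
  shows "card S = CARD('a) ^ fdim S"
proof -
  obtain B where B: "B \<subseteq> S" "fvs.independent B" "S \<subseteq> fvs.span B" "card B = fdim S"
    using fvs.basis_exists by blast
  have "fvs.span B = S" using B assms fvs.span_subspace by blast
  moreover have "finite B" using B assms finite_subset by blast
  ultimately show ?thesis using card_span_indep[of B] B by simp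
qed



lemma ssum_subspace:
  "fsubspace S \<Longrightarrow> fsubspace T \<Longrightarrow> fsubspace (ssum S T)"
  unfolding ssum_def by (rule fvs.subspace_sums)

lemma ssum_eq_image: "ssum S T = (\<lambda>(x,y). x + y) ` (S \<times> T)"
  unfolding ssum_def by (auto simp: image_def)

lemma finite_ssum: "finite S \<Longrightarrow> finite T \<Longrightarrow> finite (ssum S T)"
  unfolding ssum_eq_image by auto

lemma ssum_sub1: "fsubspace T \<Longrightarrow> S \<subseteq> ssum S T"
proof
  fix x assume "fsubspace T" "x \<in> S"
  then have "x = x + 0 \<and> x \<in> S \<and> 0 \<in> T" using fvs.subspace_0 by auto
  then show "x \<in> ssum S T" unfolding ssum_def by blast
qed

lemma ssum_sub2: "fsubspace S \<Longrightarrow> T \<subseteq> ssum S T"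
proof
  fix x assume "fsubspace S" "x \<in> T"
  then have "x = 0 + x \<and> 0 \<in> S \<and> x \<in> T" using fvs.subspace_0 by auto
  then show "x \<in> ssum S T" unfolding ssum_def by blast
qed

lemma ssum_le: "fsubspace U \<Longrightarrow> S \<subseteq> U \<Longrightarrow> T \<subseteq> U \<Longrightarrow> ssum S T \<subseteq> U"
  unfolding ssum_def using fvs.subspace_add by blast

lemma ssum_comm: "ssum S T = ssum T S"
  unfolding ssum_def by (auto simp: add.commute) (metis add.commute)+

lemma span_Un_ssum: "fvs.span (S \<union> T) = ssum (fvs.span S) (fvs.span T)"
  unfolding ssum_def by (rule fvs.span_Un)

lemma card_ssum_int:
  fixes S T :: "('a::{field,finite}) vec set"
  assumes S: "fsubspace S" "finite S" and T: "fsubspace T" "finite T"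
  shows "card (ssum S T) * card (S \<inter> T) = card S * card T"
proof -
  define F where "F z = {p \<in> S \<times> T. fst p + snd p = z}" for z
  have U: "S \<times> T = (\<Union>z\<in>ssum S T. F z)"
    unfolding F_def ssum_def by (auto; blast)
  have fin: "finite (ssum S T)" using S T finite_ssum by blast
  have finF: "\<And>z. finite (F z)" unfolding F_def using S T by auto
  have disj: "\<forall>z\<in>ssum S T. \<forall>z'\<in>ssum S T. z \<noteq> z' \<longrightarrow> F z \<inter> F z' = {}"
    unfolding F_def by auto
  have cF: "card (F z) = card (S \<inter> T)" if z: "z \<in> ssum S T" for z
  proof -
    obtain x0 y0 where xy: "x0 \<in> S" "y0 \<in> T" "z = x0 + y0" using z unfolding ssum_def by auto
    have inj: "inj_on (\<lambda>d. (x0 + d, y0 - d)) (S \<inter> T)" by (auto intro: inj_onI)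
    have "(\<lambda>d. (x0 + d, y0 - d)) ` (S \<inter> T) = F z"
    proof
      show "(\<lambda>d. (x0 + d, y0 - d)) ` (S \<inter> T) \<subseteq> F z"
        unfolding F_def using xy S T by (auto intro: fvs.subspace_add fvs.subspace_diff)
    next
      show "F z \<subseteq> (\<lambda>d. (x0 + d, y0 - d)) ` (S \<inter> T)"
      proof
        fix p assume p: "p \<in> F z"
        obtain x y where pxy: "p = (x, y)" "x \<in> S" "y \<in> T" "x + y = z" using p unfolding F_def by auto
        have "x - x0 \<in> S" using S xy pxy fvs.subspace_diff by blast
        moreover have "x - x0 = y0 - y" using pxy xy by (simp add: algebra_simps)
        moreover have "y0 - y \<in> T" using T xy pxy fvs.subspace_diff by blast
        ultimately have "x - x0 \<in> S \<inter> T" by simp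
        moreover have "p = (x0 + (x - x0), y0 - (x - x0))" using pxy xy \<open>x - x0 = y0 - y\<close>
          by (simp add: algebra_simps)
        ultimately show "p \<in> (\<lambda>d. (x0 + d, y0 - d)) ` (S \<inter> T)" by blast
      qed
    qed
    then show ?thesis using card_image[OF inj] by simp
  qed
  have "card S * card T = card (S \<times> T)" by (simp add: card_cartesian_product)
  also have "\<dots> = (\<Sum>z\<in>ssum S T. card (F z))"
    unfolding U by (rule card_UN_disjoint[OF fin]) (use finF disj in auto)
  also have "\<dots> = card (ssum S T) * card (S \<inter> T)" using cF by simp
  finally show ?thesis by simp
qed

lemma card_span_insert:
  fixes X :: "('a::{field,finite}) vec set"
  assumes fin: "finite X"
  shows "card (fvs.span (insert w X)) =
    (if w \<in> fvs.span X then card (fvs.span X) else CARD('a) * card (fvs.span X))"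
proof (cases "w \<in> fvs.span X")
  case True then show ?thesis by (simp add: fvs.span_redundant)
next
  case False
  have w0: "w \<noteq> 0" using False fvs.span_zero by auto
  have e: "fvs.span (insert w X) = ssum (fvs.span X) (fvs.span {w})"
    using span_Un_ssum[of X "{w}"] by (simp add: ssum_comm insert_commute)
  have int: "fvs.span X \<inter> fvs.span {w} = {0}"
  proof
    show "fvs.span X \<inter> fvs.span {w} \<subseteq> {0}"
    proof
      fix x assume x: "x \<in> fvs.span X \<inter> fvs.span {w}"
      then obtain c where c: "x = sc c w" using fvs.span_singleton by auto
      show "x \<in> {0}"
      proof (cases "c = 0")
        case True then show ?thesis using c by simp
      next
        case False
        have "sc (inverse c) x \<in> fvs.span X" using x fvs.span_scale by blast
        moreover have "sc (inverse c) x = w" using c False by (simp add: fvs.scale_scale)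
        ultimately show ?thesis using \<open>w \<notin> fvs.span X\<close> by simp
      qed
    qed
  qed (auto intro: fvs.span_zero)
  have cw: "card (fvs.span {w}) = CARD('a)"
  proof -
    have "inj (\<lambda>k. sc k w)"
    proof (rule injI)
      fix a b assume "sc a w = sc b w"
      then have "sc (a - b) w = 0" by (simp add: fvs.scale_left_diff_distrib)
      then show "a = b" using w0 by simp
    qed
    then show ?thesis by (simp add: fvs.span_singleton card_image)
  qed
  have "card (ssum (fvs.span X) (fvs.span {w})) * card (fvs.span X \<inter> fvs.span {w})
        = card (fvs.span X) * card (fvs.span {w})"
    by (rule card_ssum_int) (simp_all add: finite_span fin)
  then show ?thesis using False e int cw by simp
qed

lemma subspace_card_eq:
  fixes S T :: "('a::{field,finite}) vec set"
  shows "S \<subseteq> T \<Longrightarrow> finite T \<Longrightarrow> card S = card T \<Longrightarrow> S = T"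
  by (simp add: card_subset_eq)

lemma pow_q_inj: "(CARD('a::{field,finite}) ^ m = CARD('a) ^ n) = (m = n)"
  using q_ge2[where 'a='a] by (simp add: power_inject_exp)

lemma pow_q_le: "(CARD('a::{field,finite}) ^ m \<le> CARD('a) ^ n) = (m \<le> n)"
  using q_ge2[where 'a='a] by (simp add: power_increasing_iff)

lemma fdim_iff_card:
  fixes S :: "('a::{field,finite}) vec set"
  assumes "fsubspace S" "finite S"
  shows "fdim S = m \<longleftrightarrow> card S = CARD('a) ^ m"
  using card_subspace[OF assms] pow_q_inj[where 'a='a] by metis



fun Lst :: "('a::{field,finite}) vec set \<Rightarrow> 'a vec set \<Rightarrow> nat \<Rightarrow> 'a vec list set" where
  "Lst Z Y 0 = {[]}"
| "Lst Z Y (Suc m) = {w # ws | w ws. ws \<in> Lst Z Y m \<and> w \<in> Y \<and> w \<notin> fvs.span (Z \<union> set ws)}"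

lemma span_sub_eq: "fsubspace Z \<Longrightarrow> fvs.span Z = Z"
  using fvs.span_eq_iff by blast

lemma span_bound_list:
  fixes Z :: "('a::{field,finite}) vec set"
  assumes "finite Z"
  shows "card (fvs.span (Z \<union> set ws)) \<le> card (fvs.span Z) * CARD('a) ^ length ws"
proof (induction ws)
  case Nil then show ?case by simp
next
  case (Cons w ws)
  have e: "Z \<union> set (w # ws) = insert w (Z \<union> set ws)" by auto
  have "card (fvs.span (insert w (Z \<union> set ws))) \<le> CARD('a) * card (fvs.span (Z \<union> set ws))"
    using card_span_insert[of "Z \<union> set ws" w] assms by simp
  also have "\<dots> \<le> CARD('a) * (card (fvs.span Z) * CARD('a) ^ length ws)"
    using Cons.IH by simp
  finally show ?case unfolding e by (simp add: algebra_simps)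
qed

lemma Lst_char:
  fixes Z Y :: "('a::{field,finite}) vec set"
  assumes Z: "fsubspace Z" "finite Z" "card Z = CARD('a) ^ z"
  shows "ws \<in> Lst Z Y m \<longleftrightarrow>
    length ws = m \<and> set ws \<subseteq> Y \<and> card (fvs.span (Z \<union> set ws)) = CARD('a) ^ (z + m)"
proof (induction m arbitrary: ws)
  case 0
  show ?case using Z by (auto simp: span_sub_eq[OF Z(1)])
next
  case (Suc m)
  show ?case
  proof
    assume "ws \<in> Lst Z Y (Suc m)"
    then obtain w ws' where ws: "ws = w # ws'" "ws' \<in> Lst Z Y m" "w \<in> Y"
      "w \<notin> fvs.span (Z \<union> set ws')" by auto
    have IH: "length ws' = m" "set ws' \<subseteq> Y" "card (fvs.span (Z \<union> set ws')) = CARD('a) ^ (z + m)"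
      using Suc.IH ws(2) by auto
    have e: "Z \<union> set ws = insert w (Z \<union> set ws')" using ws by auto
    have "card (fvs.span (Z \<union> set ws)) = CARD('a) * CARD('a) ^ (z + m)"
      unfolding e using card_span_insert[of "Z \<union> set ws'" w] Z ws IH by simp
    then show "length ws = Suc m \<and> set ws \<subseteq> Y \<and> card (fvs.span (Z \<union> set ws)) = CARD('a) ^ (z + Suc m)"
      using ws IH by simp
  next
    assume A: "length ws = Suc m \<and> set ws \<subseteq> Y \<and> card (fvs.span (Z \<union> set ws)) = CARD('a) ^ (z + Suc m)"
    then obtain w ws' where ws: "ws = w # ws'" by (cases ws) auto
    have len: "length ws' = m" "set ws' \<subseteq> Y" "w \<in> Y" using A ws by auto
    have e: "Z \<union> set ws = insert w (Z \<union> set ws')" using ws by auto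
    have bnd: "card (fvs.span (Z \<union> set ws')) \<le> CARD('a) ^ (z + m)"
      using span_bound_list[OF Z(2), of ws'] Z len by (simp add: power_add span_sub_eq[OF Z(1)])
    have ci: "card (fvs.span (insert w (Z \<union> set ws'))) = CARD('a) ^ (z + Suc m)"
      using A e by simp
    have q: "CARD('a) \<ge> 2" by (rule q_ge2)
    have nin: "w \<notin> fvs.span (Z \<union> set ws')"
    proof
      assume "w \<in> fvs.span (Z \<union> set ws')"
      then have "card (fvs.span (Z \<union> set ws')) = CARD('a) ^ (z + Suc m)"
        using ci card_span_insert[of "Z \<union> set ws'" w] Z by simp
      with bnd have "CARD('a) ^ (z + Suc m) \<le> CARD('a) ^ (z + m)" by simp
      then show False using pow_q_le[where 'a='a, of "z + Suc m" "z + m"] by simp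
    qed
    then have "CARD('a) * card (fvs.span (Z \<union> set ws')) = CARD('a) * CARD('a) ^ (z + m)"
      using ci card_span_insert[of "Z \<union> set ws'" w] Z by simp
    then have "card (fvs.span (Z \<union> set ws')) = CARD('a) ^ (z + m)" using q by simp
    then have "ws' \<in> Lst Z Y m" using Suc.IH len by simp
    then show "ws \<in> Lst Z Y (Suc m)" using ws nin len by auto
  qed
qed

lemma Lst_card:
  fixes Z Y :: "('a::{field,finite}) vec set"
  assumes Z: "fsubspace Z" "finite Z" "card Z = CARD('a) ^ z"
    and Y: "fsubspace Y" "finite Y" "card Y = CARD('a) ^ y" and ZY: "Z \<subseteq> Y"
  shows "finite (Lst Z Y m) \<and> card (Lst Z Y m) = (\<Prod>i<m. CARD('a) ^ y - CARD('a) ^ (z + i))"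
proof (induction m)
  case 0 then show ?case by simp
next
  case (Suc m)
  let ?S = "SIGMA ws:Lst Z Y m. Y - fvs.span (Z \<union> set ws)"
  have e: "Lst Z Y (Suc m) = (\<lambda>(ws, w). w # ws) ` ?S" by auto
  have inj: "inj_on (\<lambda>(ws, w). w # ws) ?S" by (auto intro: inj_onI)
  have fS: "finite ?S" using Suc.IH Y by auto
  have c: "card (Y - fvs.span (Z \<union> set ws)) = CARD('a) ^ y - CARD('a) ^ (z + m)"
    if ws: "ws \<in> Lst Z Y m" for ws
  proof -
    have ch: "length ws = m" "set ws \<subseteq> Y" "card (fvs.span (Z \<union> set ws)) = CARD('a) ^ (z + m)"
      using Lst_char[OF Z, of ws Y m] ws by auto
    have "fvs.span (Z \<union> set ws) \<subseteq> Y"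
      using ch ZY Y by (intro fvs.span_minimal) auto
    then show ?thesis using card_Diff_subset[of "fvs.span (Z \<union> set ws)" Y] ch Y
      finite_subset by (metis)
  qed
  have "card (Lst Z Y (Suc m)) = card ?S" unfolding e by (rule card_image[OF inj])
  also have "\<dots> = (\<Sum>ws\<in>Lst Z Y m. card (Y - fvs.span (Z \<union> set ws)))"
    using Suc.IH Y by (intro card_SigmaI) auto
  also have "\<dots> = card (Lst Z Y m) * (CARD('a) ^ y - CARD('a) ^ (z + m))"
    using c by simp
  finally show ?case using Suc.IH fS e by (simp add: mult.commute)
qed

definition Vs :: "('a::{field,finite}) vec set \<Rightarrow> 'a vec set \<Rightarrow> nat \<Rightarrow> 'a vec set set" where
  "Vs Z Y m = {V. fsubspace V \<and> V \<subseteq> Y \<and> card V = CARD('a) ^ m \<and> V \<inter> Z = {0}}"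

lemma zero_subspace: "fsubspace ({0} :: ('a::field) vec set)"
  by (rule fvs.subspace_single_0)

lemma span_insert0: "fvs.span ({0} \<union> S) = fvs.span S"
  by (simp add: fvs.span_redundant fvs.span_zero)

lemma Lst_to_Vs:
  fixes Z Y :: "('a::{field,finite}) vec set"
  assumes Z: "fsubspace Z" "finite Z" "card Z = CARD('a) ^ z"
    and Y: "fsubspace Y" "finite Y" and ZY: "Z \<subseteq> Y"
    and ws: "ws \<in> Lst Z Y m"
  shows "fvs.span (set ws) \<in> Vs Z Y m \<and> ws \<in> Lst {0} (fvs.span (set ws)) m"
proof -
  let ?S = "fvs.span (set ws)"
  have ch: "length ws = m" "set ws \<subseteq> Y" "card (fvs.span (Z \<union> set ws)) = CARD('a) ^ (z + m)"
    using Lst_char[OF Z, of ws Y m] ws by auto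
  have SY: "?S \<subseteq> Y" using ch Y by (intro fvs.span_minimal) auto
  have fS: "finite ?S" using SY Y finite_subset by blast
  have "fvs.span (Z \<union> set ws) = ssum Z ?S"
    using span_Un_ssum[of Z "set ws"] unfolding span_sub_eq[OF Z(1)] .
  then have eq: "CARD('a) ^ (z + m) * card (Z \<inter> ?S) = CARD('a) ^ z * card ?S"
    using card_ssum_int[of Z ?S] Z fS ch by simp
  have "card ?S \<le> CARD('a) ^ card (set ws)" by (rule card_span_le) simp
  also have "\<dots> \<le> CARD('a) ^ m" using ch q_ge2[where 'a='a]
    by (metis card_length power_increasing le_trans one_le_numeral)
  finally have Sle: "card ?S \<le> CARD('a) ^ m" .
  have pos: "CARD('a) ^ z > 0" using q_ge2[where 'a='a] by simp
  have "CARD('a) ^ z * (CARD('a) ^ m * card (Z \<inter> ?S)) \<le> CARD('a) ^ z * (CARD('a) ^ m * 1)"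
    using eq Sle by (simp add: power_add algebra_simps)
  then have "card (Z \<inter> ?S) \<le> 1" using pos q_ge2[where 'a='a] by simp
  moreover have "0 \<in> Z \<inter> ?S" using Z fvs.subspace_0 fvs.span_zero by blast
  moreover have "finite (Z \<inter> ?S)" using Z by simp
  ultimately have ZS: "Z \<inter> ?S = {0}"
    using card_le_Suc0_iff_eq[of "Z \<inter> ?S"] by auto
  have cS: "card ?S = CARD('a) ^ m" using eq ZS pos by (simp add: power_add)
  have V: "?S \<in> Vs Z Y m" unfolding Vs_def using SY cS ZS by auto
  have "ws \<in> Lst {0} ?S m"
    using Lst_char[OF zero_subspace, of 0 ws ?S m] ch cS span_insert0[of "set ws"]
    by (simp add: fvs.span_superset)
  then show ?thesis using V by simp
qed

lemma Vs_to_Lst: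
  fixes Z Y :: "('a::{field,finite}) vec set"
  assumes Z: "fsubspace Z" "finite Z" "card Z = CARD('a) ^ z"
    and Y: "fsubspace Y" "finite Y"
    and V: "V \<in> Vs Z Y m" and ws: "ws \<in> Lst {0} V m"
  shows "ws \<in> Lst Z Y m \<and> fvs.span (set ws) = V"
proof -
  have Vp: "fsubspace V" "V \<subseteq> Y" "card V = CARD('a) ^ m" "V \<inter> Z = {0}" using V unfolding Vs_def by auto
  have fV: "finite V" using Vp Y finite_subset by blast
  have ch: "length ws = m" "set ws \<subseteq> V" "card (fvs.span ({0} \<union> set ws)) = CARD('a) ^ (0 + m)"
    using Lst_char[OF zero_subspace, of 0 ws V m] ws by auto
  have sub: "fvs.span (set ws) \<subseteq> V" using ch Vp by (intro fvs.span_minimal) auto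
  have SV: "fvs.span (set ws) = V"
    using ch span_insert0[of "set ws"] Vp sub fV by (intro subspace_card_eq) auto
  have "fvs.span (Z \<union> set ws) = ssum Z V"
    using span_Un_ssum[of Z "set ws"] SV unfolding span_sub_eq[OF Z(1)] by simp
  moreover have "card (ssum Z V) * card (Z \<inter> V) = card Z * card V"
    using card_ssum_int[of Z V] Z Vp fV by simp
  moreover have "Z \<inter> V = {0}" using Vp by auto
  ultimately have "card (fvs.span (Z \<union> set ws)) = CARD('a) ^ (z + m)"
    using Z Vp by (simp add: power_add)
  then have "ws \<in> Lst Z Y m" using Lst_char[OF Z, of ws Y m] ch Vp by auto
  then show ?thesis using SV by simp
qed

lemma Vs_count_nat:
  fixes Z Y :: "('a::{field,finite}) vec set"
  assumes Z: "fsubspace Z" "finite Z" "card Z = CARD('a) ^ z"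
    and Y: "fsubspace Y" "finite Y" "card Y = CARD('a) ^ y" and ZY: "Z \<subseteq> Y"
  shows "card (Vs Z Y m) * (\<Prod>i<m. CARD('a) ^ m - CARD('a) ^ i)
         = (\<Prod>i<m. CARD('a) ^ y - CARD('a) ^ (z + i))"
proof -
  have fVs: "finite (Vs Z Y m)"
    by (rule finite_subset[of _ "Pow Y"]) (use Y in \<open>auto simp: Vs_def\<close>)
  have U: "Lst Z Y m = (\<Union>V\<in>Vs Z Y m. Lst {0} V m)"
  proof
    show "Lst Z Y m \<subseteq> (\<Union>V\<in>Vs Z Y m. Lst {0} V m)"
      using Lst_to_Vs[OF Z Y(1,2) ZY] by blast
    show "(\<Union>V\<in>Vs Z Y m. Lst {0} V m) \<subseteq> Lst Z Y m"
      using Vs_to_Lst[OF Z Y(1,2)] by blast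
  qed
  have cV: "finite (Lst {0} V m) \<and> card (Lst {0} V m) = (\<Prod>i<m. CARD('a) ^ m - CARD('a) ^ i)"
    if V: "V \<in> Vs Z Y m" for V
  proof -
    have Vp: "fsubspace V" "V \<subseteq> Y" "card V = CARD('a) ^ m" using V unfolding Vs_def by auto
    have fV: "finite V" using Vp Y finite_subset by blast
    show ?thesis using Lst_card[OF zero_subspace _ _ Vp(1) fV Vp(3), of 0 m] fvs.subspace_0[OF Vp(1)] by simp
  qed
  have disj: "\<forall>V\<in>Vs Z Y m. \<forall>V'\<in>Vs Z Y m. V \<noteq> V' \<longrightarrow> Lst {0} V m \<inter> Lst {0} V' m = {}"
    using Vs_to_Lst[OF Z Y(1,2)] by blast
  have "card (Lst Z Y m) = (\<Sum>V\<in>Vs Z Y m. card (Lst {0} V m))"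
    unfolding U by (rule card_UN_disjoint[OF fVs]) (use cV disj in auto)
  also have "\<dots> = card (Vs Z Y m) * (\<Prod>i<m. CARD('a) ^ m - CARD('a) ^ i)"
    using cV by simp
  finally show ?thesis using Lst_card[OF Z Y ZY, of m] by simp
qed



lemma gbinom_nat: "b \<le> a \<Longrightarrow> gbinom Q (int a) (int b) = (\<Prod>i<b. (Q^a - Q^i)/(Q^b - Q^i))"
  by (simp add: gbinom_def)

lemma gbinom_nat0: "a < b \<Longrightarrow> gbinom Q (int a) (int b) = 0"
  by (simp add: gbinom_def)

lemma Vs_eq:
  fixes Y Z :: "('a::{field,finite}) vec set"
  assumes "finite Y"
  shows "{V. fsubspace V \<and> V \<subseteq> Y \<and> fdim V = m \<and> V \<inter> Z = {0}} = Vs Z Y m"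
  unfolding Vs_def
proof (rule Collect_cong)
  fix V :: "'a vec set"
  show "(fsubspace V \<and> V \<subseteq> Y \<and> fdim V = m \<and> V \<inter> Z = {0}) =
        (fsubspace V \<and> V \<subseteq> Y \<and> card V = CARD('a) ^ m \<and> V \<inter> Z = {0})"
  proof (cases "fsubspace V \<and> V \<subseteq> Y")
    case True
    then have "finite V" using assms finite_subset by blast
    with True show ?thesis using fdim_iff_card[of V m] by auto
  next
    case False then show ?thesis by auto
  qed
qed

lemma G_count:
  fixes Z Y :: "('a::{field,finite}) vec set"
  assumes Z: "fsubspace Z" "finite Z" and Y: "fsubspace Y" "finite Y" and ZY: "Z \<subseteq> Y"
  shows "real (card {V. fsubspace V \<and> V \<subseteq> Y \<and> fdim V = m \<and> V \<inter> Z = {0}})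
     = real CARD('a) ^ (fdim Z * m) * gbinom (real CARD('a)) (int (fdim Y - fdim Z)) (int m)"
proof -
  define z where "z = fdim Z"
  define y where "y = fdim Y"
  define Q where "Q = real CARD('a)"
  have Q2: "Q \<ge> 2" using q_ge2[where 'a='a] unfolding Q_def by simp
  have cZ: "card Z = CARD('a) ^ z" using card_subspace[OF Z] z_def by simp
  have cY: "card Y = CARD('a) ^ y" using card_subspace[OF Y] y_def by simp
  have zy: "z \<le> y"
  proof -
    have "card Z \<le> card Y" using ZY Y by (simp add: card_mono)
    then show ?thesis using cZ cY pow_q_le[where 'a='a] by simp
  qed
  have E: "{V. fsubspace V \<and> V \<subseteq> Y \<and> fdim V = m \<and> V \<inter> Z = {0}} = Vs Z Y m"
    by (rule Vs_eq[OF Y(2)])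
  have N: "card (Vs Z Y m) * (\<Prod>i<m. CARD('a) ^ m - CARD('a) ^ i)
         = (\<Prod>i<m. CARD('a) ^ y - CARD('a) ^ (z + i))"
    by (rule Vs_count_nat[OF Z cZ Y cY ZY])
  show ?thesis
  proof (cases "m \<le> y - z")
    case True
    have le1: "CARD('a) ^ i \<le> CARD('a) ^ m" if "i < m" for i
      using that pow_q_le[where 'a='a] by simp
    have le2: "CARD('a) ^ (z + i) \<le> CARD('a) ^ y" if "i < m" for i
      using that True pow_q_le[where 'a='a] by simp
    have "real (card (Vs Z Y m)) * (\<Prod>i<m. Q ^ m - Q ^ i) = (\<Prod>i<m. Q ^ y - Q ^ (z + i))"
    proof -
      have "real (card (Vs Z Y m) * (\<Prod>i<m. CARD('a) ^ m - CARD('a) ^ i))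
          = real (\<Prod>i<m. CARD('a) ^ y - CARD('a) ^ (z + i))" using N by simp
      moreover have "real (\<Prod>i<m. CARD('a) ^ m - CARD('a) ^ i) = (\<Prod>i<m. Q ^ m - Q ^ i)"
        unfolding of_nat_prod Q_def by (rule prod.cong) (simp_all add: le1 of_nat_diff)
      moreover have "real (\<Prod>i<m. CARD('a) ^ y - CARD('a) ^ (z + i)) = (\<Prod>i<m. Q ^ y - Q ^ (z + i))"
        unfolding of_nat_prod Q_def by (rule prod.cong) (simp_all add: le2 of_nat_diff)
      ultimately show ?thesis by simp
    qed
    also have "\<dots> = (\<Prod>i<m. Q ^ z * (Q ^ (y - z) - Q ^ i))"
    proof (rule prod.cong)
      fix i assume "i \<in> {..<m}"
      have "Q ^ y = Q ^ z * Q ^ (y - z)" using zy by (simp add: power_add[symmetric])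
      then show "Q ^ y - Q ^ (z + i) = Q ^ z * (Q ^ (y - z) - Q ^ i)"
        by (simp add: power_add algebra_simps)
    qed simp
    also have "\<dots> = Q ^ (z * m) * (\<Prod>i<m. Q ^ (y - z) - Q ^ i)"
      by (simp add: prod.distrib power_mult)
    finally have eq: "real (card (Vs Z Y m)) * (\<Prod>i<m. Q ^ m - Q ^ i)
       = Q ^ (z * m) * (\<Prod>i<m. Q ^ (y - z) - Q ^ i)" .
    have nz: "(\<Prod>i<m. Q ^ m - Q ^ i) \<noteq> 0"
    proof -
      have "Q ^ m - Q ^ i \<noteq> 0" if "i \<in> {..<m}" for i
        using that Q2 power_strict_increasing[of i m Q] by simp
      then show ?thesis by (subst prod_zero_iff) auto
    qed
    have g: "gbinom Q (int (y - z)) (int m) = (\<Prod>i<m. Q ^ (y - z) - Q ^ i) / (\<Prod>i<m. Q ^ m - Q ^ i)"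
      unfolding gbinom_nat[OF True, of Q] by (rule prod_dividef)
    have c: "real (card (Vs Z Y m)) = (Q ^ (z * m) * (\<Prod>i<m. Q ^ (y - z) - Q ^ i)) / (\<Prod>i<m. Q ^ m - Q ^ i)"
      by (subst nonzero_eq_divide_eq[OF nz]) (rule eq)
    have "real (card (Vs Z Y m)) = Q ^ (z * m) * gbinom Q (int (y - z)) (int m)"
      unfolding c g by (simp only: times_divide_eq_right)
    then show ?thesis unfolding E Q_def z_def y_def .
  next
    case False
    have "Vs Z Y m = {}"
    proof (rule ccontr)
      assume "Vs Z Y m \<noteq> {}"
      then obtain V where V: "V \<in> Vs Z Y m" by blast
      have Vp: "fsubspace V" "V \<subseteq> Y" "card V = CARD('a) ^ m" "V \<inter> Z = {0}" using V unfolding Vs_def by auto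
      have fV: "finite V" using Vp Y finite_subset by blast
      have "card (ssum Z V) * card (Z \<inter> V) = card Z * card V" using card_ssum_int[OF Z Vp(1) fV] .
      moreover have "Z \<inter> V = {0}" using Vp by blast
      ultimately have "card (ssum Z V) = CARD('a) ^ (z + m)" using Vp cZ by (simp add: power_add)
      moreover have "card (ssum Z V) \<le> card Y"
        using ssum_le[OF Y(1) ZY Vp(2)] Y by (simp add: card_mono)
      ultimately have "z + m \<le> y" using cY pow_q_le[where 'a='a] by simp
      then show False using False by simp
    qed
    moreover have "gbinom Q (int (y - z)) (int m) = 0" using gbinom_nat0[of "y - z" m Q] False by simp
    ultimately have "real (card (Vs Z Y m)) = Q ^ (z * m) * gbinom Q (int (y - z)) (int m)"
      by simp
    then show ?thesis unfolding E Q_def z_def y_def .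
  qed
qed



lemma ssum_mem: "a \<in> S \<Longrightarrow> b \<in> T \<Longrightarrow> a + b \<in> ssum S T"
  unfolding ssum_def by blast

lemma ssumE: "v \<in> ssum S T \<Longrightarrow> (\<And>a b. a \<in> S \<Longrightarrow> b \<in> T \<Longrightarrow> v = a + b \<Longrightarrow> P) \<Longrightarrow> P"
  unfolding ssum_def by blast

lemma int_zero_card:
  fixes A :: "('a::{field,finite}) vec set"
  assumes "fsubspace A" "finite A" "card A \<le> 1" shows "A = {0}"
proof -
  have "0 \<in> A" using assms fvs.subspace_0 by blast
  then show ?thesis using assms card_le_Suc0_iff_eq[of A] by auto
qed

lemma card_ssum_direct:
  fixes S T :: "('a::{field,finite}) vec set"
  assumes "fsubspace S" "finite S" "fsubspace T" "finite T" "S \<inter> T = {0}"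
  shows "card (ssum S T) = card S * card T"
  using card_ssum_int[OF assms(1-4)] assms(5) by simp

lemma complement_exists:
  fixes X Y :: "('a::{field,finite}) vec set"
  assumes X: "fsubspace X" and Y: "fsubspace Y" "finite Y" and XY: "X \<subseteq> Y"
  obtains C where "fsubspace C" "C \<subseteq> Y" "X \<inter> C = {0}" "ssum X C = Y"
proof -
  obtain BX where BX: "BX \<subseteq> X" "fvs.independent BX" "X \<subseteq> fvs.span BX" "card BX = fdim X"
    by (rule fvs.basis_exists)
  obtain B where B: "BX \<subseteq> B" "B \<subseteq> Y" "fvs.independent B" "Y \<subseteq> fvs.span B"
    by (rule fvs.maximal_independent_subset_extend[of BX Y]) (use BX XY in auto)
  have fB: "finite B" using B Y finite_subset by blast
  have fBX: "finite BX" using B fB finite_subset by blast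
  have spX: "fvs.span BX = X" using BX X fvs.span_subspace by blast
  have spB: "fvs.span B = Y" using B Y fvs.span_subspace by blast
  define C where "C = fvs.span (B - BX)"
  have Cs: "fsubspace C" unfolding C_def by simp
  have CY: "C \<subseteq> Y" unfolding C_def using B Y by (intro fvs.span_minimal) auto
  have fX: "finite X" using XY Y finite_subset by blast
  have fC: "finite C" using CY Y finite_subset by blast
  have sum: "ssum X C = Y"
  proof -
    have "ssum X C = fvs.span (BX \<union> (B - BX))"
      unfolding C_def span_Un_ssum spX ..
    also have "BX \<union> (B - BX) = B" using B by blast
    finally show ?thesis using spB by simp
  qed
  have cX: "card X = CARD('a) ^ card BX" using card_span_indep[OF fBX BX(2)] spX by simp
  have cY: "card Y = CARD('a) ^ card B" using card_span_indep[OF fB B(3)] spB by simp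
  have cC: "card C \<le> CARD('a) ^ card (B - BX)" unfolding C_def using fB by (intro card_span_le) simp
  have cB: "card B = card BX + card (B - BX)" using B fB fBX
    by (metis card_Diff_subset add_diff_inverse_nat card_mono not_less)
  have "card Y * card (X \<inter> C) = card X * card C"
    using card_ssum_int[OF X fX Cs fC] sum by simp
  then have "CARD('a) ^ card BX * CARD('a) ^ card (B - BX) * card (X \<inter> C) \<le> CARD('a) ^ card BX * CARD('a) ^ card (B - BX)"
    using cX cY cC cB by (simp add: power_add)
  then have "card (X \<inter> C) \<le> 1" using q_ge2[where 'a='a] by simp
  then have "X \<inter> C = {0}" using X Cs fX by (intro int_zero_card) (auto intro: fvs.subspace_inter)
  then show ?thesis using that Cs CY sum by blast
qed

lemma bij_complement:
  fixes X C V :: "('a::{field,finite}) vec set"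
  assumes X: "fsubspace X" and C: "fsubspace C" and XC: "X \<inter> C = {0}"
  shows "fsubspace V \<Longrightarrow> X \<subseteq> V \<Longrightarrow> V \<subseteq> ssum X C \<Longrightarrow> ssum X (V \<inter> C) = V"
    and "V \<subseteq> C \<Longrightarrow> ssum X V \<inter> C = V"
proof -
  assume V: "fsubspace V" "X \<subseteq> V" "V \<subseteq> ssum X C"
  show "ssum X (V \<inter> C) = V"
  proof
    show "ssum X (V \<inter> C) \<subseteq> V" using V by (intro ssum_le) auto
    show "V \<subseteq> ssum X (V \<inter> C)"
    proof
      fix v assume v: "v \<in> V"
      then have "v \<in> ssum X C" using V by blast
      then obtain a b where ab: "a \<in> X" "b \<in> C" "v = a + b" by (rule ssumE)
      have "b = v - a" using ab by simp
      then have "b \<in> V" using V v ab fvs.subspace_diff by blast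
      then show "v \<in> ssum X (V \<inter> C)" using ab ssum_mem by blast
    qed
  qed
next
  assume V: "V \<subseteq> C"
  show "ssum X V \<inter> C = V"
  proof
    show "ssum X V \<inter> C \<subseteq> V"
    proof
      fix v assume v: "v \<in> ssum X V \<inter> C"
      then have "v \<in> ssum X V" by blast
      then obtain a b where ab: "a \<in> X" "b \<in> V" "v = a + b" by (rule ssumE)
      have "a = v - b" using ab by simp
      then have "a \<in> C" using C v V ab fvs.subspace_diff by blast
      then have "a = 0" using XC ab by blast
      then show "v \<in> V" using ab by simp
    qed
    show "V \<subseteq> ssum X V \<inter> C" using V ssum_sub2[OF X] by blast
  qed
qed



lemma fin_sub: "finite E \<Longrightarrow> V \<subseteq> E \<Longrightarrow> finite V"
  by (rule finite_subset)

lemma H_count: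
  fixes X W E :: "('a::{field,finite}) vec set"
  assumes X: "fsubspace X" and W: "fsubspace W" and E: "fsubspace E" "finite E"
    and XW: "X \<subseteq> W" and WE: "W \<subseteq> E" and mx: "fdim X \<le> m"
  shows "real (card {V. fsubspace V \<and> V \<subseteq> E \<and> fdim V = m \<and> V \<inter> W = X})
    = real CARD('a) ^ ((fdim W - fdim X) * (m - fdim X))
      * gbinom (real CARD('a)) (int (fdim E - fdim W)) (int (m - fdim X))"
proof -
  have fW: "finite W" using E WE finite_subset by blast
  have fX: "finite X" using fW XW finite_subset by blast
  obtain X' where X': "fsubspace X'" "X' \<subseteq> W" "X \<inter> X' = {0}" "ssum X X' = W"
    using complement_exists[OF X W fW XW] by blast
  obtain D where D: "fsubspace D" "D \<subseteq> E" "W \<inter> D = {0}" "ssum W D = E"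
    using complement_exists[OF W E WE] by blast
  define C where "C = ssum X' D"
  have fX': "finite X'" using X' fW finite_subset by blast
  have fD: "finite D" using D E finite_subset by blast
  have Cs: "fsubspace C" unfolding C_def using X' D by (simp add: ssum_subspace)
  have CE: "C \<subseteq> E" unfolding C_def using X' D WE E by (intro ssum_le) auto
  have fC: "finite C" using CE E finite_subset by blast
  have X'C: "X' \<subseteq> C" unfolding C_def using ssum_sub1[OF D(1)] .
  have X'D: "X' \<inter> D = {0}" using X' D by blast
  have WC: "W \<inter> C \<subseteq> X'"
  proof
    fix v assume v: "v \<in> W \<inter> C"
    then have "v \<in> ssum X' D" unfolding C_def by blast
    then obtain a b where ab: "a \<in> X'" "b \<in> D" "v = a + b" by (rule ssumE)
    have "b = v - a" using ab by simp
    then have "b \<in> W" using v ab X' W fvs.subspace_diff by blast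
    then have "b = 0" using D ab by blast
    then show "v \<in> X'" using ab by simp
  qed
  have XC: "X \<inter> C = {0}"
  proof -
    have "X \<inter> C \<subseteq> X \<inter> X'" using XW WC by blast
    then show ?thesis using X' X Cs fvs.subspace_0 by blast
  qed
  have XCE: "ssum X C = E"
  proof
    show "ssum X C \<subseteq> E" using XW WE CE E by (intro ssum_le) auto
    show "E \<subseteq> ssum X C"
    proof
      fix e assume "e \<in> E"
      then have "e \<in> ssum W D" using D by simp
      then obtain w d where wd: "w \<in> W" "d \<in> D" "e = w + d" by (rule ssumE)
      have "w \<in> ssum X X'" using X' wd by simp
      then obtain a b where ab: "a \<in> X" "b \<in> X'" "w = a + b" by (rule ssumE)
      have "b + d \<in> C" unfolding C_def using ab(2) wd(2) by (rule ssum_mem)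
      moreover have "e = a + (b + d)" using wd ab by (simp add: add.assoc)
      ultimately show "e \<in> ssum X C" using ab ssum_mem by blast
    qed
  qed
  let ?x = "fdim X"
  define A where "A = {V. fsubspace V \<and> V \<subseteq> E \<and> fdim V = m \<and> V \<inter> W = X}"
  define B where "B = {V. fsubspace V \<and> V \<subseteq> C \<and> fdim V = m - ?x \<and> V \<inter> X' = {0}}"
  have cX: "card X = CARD('a) ^ ?x" using card_subspace[OF X fX] .
  have bij: "bij_betw (\<lambda>V. V \<inter> C) A B"
  proof (rule bij_betw_byWitness[where f' = "\<lambda>V. ssum X V"])
    show "\<forall>V\<in>A. ssum X (V \<inter> C) = V"
    proof
      fix V assume "V \<in> A"
      then have V: "fsubspace V" "V \<subseteq> E" "V \<inter> W = X" unfolding A_def by auto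
      show "ssum X (V \<inter> C) = V" using bij_complement(1)[OF X Cs XC V(1)] V XCE by blast
    qed
    show "\<forall>V\<in>B. ssum X V \<inter> C = V"
      using bij_complement(2)[OF X Cs XC] unfolding B_def by blast
    show "(\<lambda>V. V \<inter> C) ` A \<subseteq> B"
    proof
      fix V' assume "V' \<in> (\<lambda>V. V \<inter> C) ` A"
      then obtain V where V': "V' = V \<inter> C" and "V \<in> A" by blast
      then have V: "fsubspace V" "V \<subseteq> E" "fdim V = m" "V \<inter> W = X" unfolding A_def by auto
      have fV: "finite V" using V E finite_subset by blast
      have sV: "fsubspace (V \<inter> C)" using V Cs by (simp add: fvs.subspace_inter)
      have fVC: "finite (V \<inter> C)" using fV by simp
      have "ssum X (V \<inter> C) = V" using bij_complement(1)[OF X Cs XC V(1)] V XCE by blast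
      moreover have "X \<inter> (V \<inter> C) = {0}" using XC fvs.subspace_0[OF X] fvs.subspace_0[OF V(1)] by blast
      ultimately have "card V = card X * card (V \<inter> C)"
        using card_ssum_direct[OF X fX sV fVC] by simp
      then have "CARD('a) ^ m = CARD('a) ^ ?x * card (V \<inter> C)"
        using card_subspace[OF V(1) fV] V cX by simp
      then have "card (V \<inter> C) = CARD('a) ^ (m - ?x)"
        using mx q_ge2[where 'a='a] by (simp add: power_diff)
      then have d: "fdim (V \<inter> C) = m - ?x" using fdim_iff_card[OF sV fVC] by simp
      have "V \<inter> C \<inter> X' = {0}"
      proof -
        have "V \<inter> C \<inter> X' \<subseteq> X \<inter> X'" using V X' by blast
        then show ?thesis using X' fvs.subspace_0[OF V(1)] fvs.subspace_0[OF Cs] by blast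
      qed
      then show "V' \<in> B" unfolding B_def V' using sV d by auto
    qed
    show "(\<lambda>V. ssum X V) ` B \<subseteq> A"
    proof
      fix V' assume "V' \<in> (\<lambda>V. ssum X V) ` B"
      then obtain V where V': "V' = ssum X V" and "V \<in> B" by blast
      then have V: "fsubspace V" "V \<subseteq> C" "fdim V = m - ?x" "V \<inter> X' = {0}" unfolding B_def by auto
      have fV: "finite V" using V fC finite_subset by blast
      have s: "fsubspace (ssum X V)" using X V by (simp add: ssum_subspace)
      have sub: "ssum X V \<subseteq> E" using XW WE V CE E by (intro ssum_le) auto
      have fs: "finite (ssum X V)" using sub E finite_subset by blast
      have "X \<inter> V = {0}" using XC V fvs.subspace_0[OF X] by blast
      then have "card (ssum X V) = card X * card V" using card_ssum_direct[OF X fX V(1) fV] by simp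
      also have "\<dots> = CARD('a) ^ m" using cX card_subspace[OF V(1) fV] V mx
        by (simp add: power_add[symmetric])
      finally have d: "fdim (ssum X V) = m" using fdim_iff_card[OF s fs] by simp
      have "ssum X V \<inter> W = X"
      proof
        show "X \<subseteq> ssum X V \<inter> W" using ssum_sub1[OF V(1)] XW by blast
        show "ssum X V \<inter> W \<subseteq> X"
        proof
          fix v assume v: "v \<in> ssum X V \<inter> W"
          then have "v \<in> ssum X V" by blast
          then obtain a b where ab: "a \<in> X" "b \<in> V" "v = a + b" by (rule ssumE)
          have "b = v - a" using ab by simp
          then have "b \<in> W" using v ab XW W fvs.subspace_diff by blast
          moreover have "b \<in> C" using ab V by blast
          ultimately have "b \<in> X'" using WC by blast
          then have "b = 0" using V ab by blast
          then show "v \<in> X" using ab by simp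
        qed
      qed
      then show "V' \<in> A" unfolding A_def V' using s sub d by auto
    qed
  qed
  have cAB: "card A = card B" using bij_betw_same_card[OF bij] .
  have G: "real (card B) = real CARD('a) ^ (fdim X' * (m - ?x))
      * gbinom (real CARD('a)) (int (fdim C - fdim X')) (int (m - ?x))"
    unfolding B_def by (rule G_count[OF X'(1) fX' Cs fC X'C])
  have cW: "card W = card X * card X'" using card_ssum_direct[OF X fX X'(1) fX' X'(3)] X' by simp
  have cE: "card E = card W * card D" using card_ssum_direct[OF W fW D(1) fD D(3)] D by simp
  have cC: "card C = card X' * card D" unfolding C_def using card_ssum_direct[OF X'(1) fX' D(1) fD X'D] .
  have dW: "fdim W = ?x + fdim X'"
    using cW card_subspace[OF W fW] card_subspace[OF X fX] card_subspace[OF X'(1) fX']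
    by (simp add: power_add[symmetric] pow_q_inj)
  have dE: "fdim E = fdim W + fdim D"
    using cE card_subspace[OF W fW] card_subspace[OF E] card_subspace[OF D(1) fD]
    by (simp add: power_add[symmetric] pow_q_inj)
  have dC: "fdim C = fdim X' + fdim D"
    using cC card_subspace[OF Cs fC] card_subspace[OF X'(1) fX'] card_subspace[OF D(1) fD]
    by (simp add: power_add[symmetric] pow_q_inj)
  have e1: "fdim X' = fdim W - ?x" using dW by simp
  have e2: "fdim C - fdim X' = fdim E - fdim W" using dE dC by simp
  show ?thesis using G cAB e1 e2 unfolding A_def[symmetric] by simp
qed




interpretation fvp: vector_space_pair "sc :: 'a::field \<Rightarrow> (nat \<Rightarrow> 'a) \<Rightarrow> _" "sc :: 'a \<Rightarrow> (nat \<Rightarrow> 'a) \<Rightarrow> _" ..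

lemma indep_from_card:
  fixes S :: "('a::{field,finite}) vec set"
  assumes fin: "finite S" and c: "card (fvs.span S) = CARD('a) ^ card S"
  shows "fvs.independent S"
proof (rule ccontr)
  assume "\<not> fvs.independent S"
  then obtain a where a: "a \<in> S" "a \<in> fvs.span (S - {a})" unfolding fvs.dependent_def by blast
  have "fvs.span S = fvs.span (insert a (S - {a}))" using a by (simp add: insert_absorb)
  also have "\<dots> = fvs.span (S - {a})" by (rule fvs.span_redundant[OF a(2)])
  finally have "card (fvs.span S) \<le> CARD('a) ^ card (S - {a})" using card_span_le[of "S - {a}"] fin by simp
  moreover have "card (S - {a}) = card S - 1" using a fin by simp
  ultimately have "CARD('a) ^ card S \<le> CARD('a) ^ (card S - 1)" using c a fin by simp
  then have "card S \<le> card S - 1" using pow_q_le[where 'a='a] by blast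
  moreover have "card S > 0" using a fin by (auto simp: card_gt_0_iff)
  ultimately show False by simp
qed

lemma direct_basis:
  fixes A B :: "('a::{field,finite}) vec set"
  assumes A: "fsubspace A" "finite A" and B: "fsubspace B" "finite B" and AB: "A \<inter> B = {0}"
  obtains BA BB where "finite BA" "finite BB" "BA \<inter> BB = {}" "fvs.independent (BA \<union> BB)"
    "fvs.span BA = A" "fvs.span BB = B" "card BA = fdim A" "card BB = fdim B"
proof -
  obtain BA where BA: "BA \<subseteq> A" "fvs.independent BA" "A \<subseteq> fvs.span BA" "card BA = fdim A"
    by (rule fvs.basis_exists)
  obtain BB where BB: "BB \<subseteq> B" "fvs.independent BB" "B \<subseteq> fvs.span BB" "card BB = fdim B"
    by (rule fvs.basis_exists)
  have fA: "finite BA" using BA A finite_subset by blast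
  have fB: "finite BB" using BB B finite_subset by blast
  have sA: "fvs.span BA = A" using BA A fvs.span_subspace by blast
  have sB: "fvs.span BB = B" using BB B fvs.span_subspace by blast
  have disj: "BA \<inter> BB = {}"
  proof -
    have "BA \<inter> BB \<subseteq> {0}" using BA BB AB by blast
    moreover have "0 \<notin> BA" using BA fvs.dependent_zero by blast
    ultimately show ?thesis by blast
  qed
  have "card (fvs.span (BA \<union> BB)) = card (ssum A B)" using span_Un_ssum[of BA BB] sA sB by simp
  also have "\<dots> = card A * card B" using card_ssum_direct[OF A B AB] .
  also have "\<dots> = CARD('a) ^ card (BA \<union> BB)"
    using card_span_indep[OF fA BA(2)] card_span_indep[OF fB BB(2)] sA sB disj fA fB
    by (simp add: card_Un_disjoint power_add)
  finally have "fvs.independent (BA \<union> BB)" using fA fB by (intro indep_from_card) auto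
  then show ?thesis using that fA fB disj sA sB BA BB by blast
qed

definition Sset :: "('a::{field,finite}) vec set \<Rightarrow> 'a vec set \<Rightarrow> nat \<Rightarrow> nat \<Rightarrow> nat \<Rightarrow> 'a vec set set" where
  "Sset A B n c e = {V. fsubspace V \<and> V \<subseteq> ssum A B \<and> fdim V = n \<and> fdim (V \<inter> A) = c \<and> fdim (V \<inter> B) = e}"

lemma iso_count:
  fixes A B A' B' :: "('a::{field,finite}) vec set"
  assumes A: "fsubspace A" "finite A" and B: "fsubspace B" "finite B" and AB: "A \<inter> B = {0}"
    and A': "fsubspace A'" "finite A'" and B': "fsubspace B'" "finite B'" and AB': "A' \<inter> B' = {0}"
    and dA: "fdim A = fdim A'" and dB: "fdim B = fdim B'"
  shows "card (Sset A B n c e) = card (Sset A' B' n c e)"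
proof -
  obtain BA BB where b: "finite BA" "finite BB" "BA \<inter> BB = {}" "fvs.independent (BA \<union> BB)"
    "fvs.span BA = A" "fvs.span BB = B" "card BA = fdim A" "card BB = fdim B"
    using direct_basis[OF A B AB] by blast
  obtain BA' BB' where b': "finite BA'" "finite BB'" "BA' \<inter> BB' = {}" "fvs.independent (BA' \<union> BB')"
    "fvs.span BA' = A'" "fvs.span BB' = B'" "card BA' = fdim A'" "card BB' = fdim B'"
    using direct_basis[OF A' B' AB'] by blast
  obtain gA where gA: "bij_betw gA BA BA'" using finite_same_card_bij b b' dA by metis
  obtain gB where gB: "bij_betw gB BB BB'" using finite_same_card_bij b b' dB by metis
  define g where "g x = (if x \<in> BA then gA x else gB x)" for x
  obtain f where f: "Vector_Spaces.linear sc sc f" "\<forall>x\<in>BA \<union> BB. f x = g x"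
    using fvp.linear_independent_extend[OF b(4), of g] by blast
  have fA: "f ` BA = BA'" using gA f unfolding g_def bij_betw_def by (auto simp: image_def)
  have fB: "f ` BB = BB'" using gB f b(3) unfolding g_def bij_betw_def by (auto simp: image_def)
  have injB: "inj_on f (BA \<union> BB)"
  proof (rule inj_onI)
    fix x y assume x: "x \<in> BA \<union> BB" and y: "y \<in> BA \<union> BB" and e: "f x = f y"
    have fx: "f x = g x" "f y = g y" using f x y by auto
    show "x = y"
    proof (cases "x \<in> BA"; cases "y \<in> BA")
      assume "x \<in> BA" "y \<in> BA" then show ?thesis using e fx gA unfolding g_def bij_betw_def inj_on_def by auto
    next
      assume "x \<notin> BA" "y \<notin> BA" then show ?thesis using x y e fx gB unfolding g_def bij_betw_def inj_on_def by auto
    next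
      assume xy: "x \<in> BA" "y \<notin> BA"
      then have "g x \<in> BA'" "g y \<in> BB'" using gA gB y unfolding g_def bij_betw_def by auto
      then show ?thesis using e fx b'(3) by auto
    next
      assume xy: "x \<notin> BA" "y \<in> BA"
      then have "g y \<in> BA'" "g x \<in> BB'" using gA gB x unfolding g_def bij_betw_def by auto
      then show ?thesis using e fx b'(3) by auto
    qed
  qed
  have img: "f ` (BA \<union> BB) = BA' \<union> BB'" using fA fB by (simp add: image_Un)
  let ?M = "ssum A B"
  have M: "?M = fvs.span (BA \<union> BB)" using span_Un_ssum[of BA BB] b by simp
  have injM: "inj_on f ?M" unfolding M
    using fvp.linear_inj_on_span_independent_image[OF f(1) _ injB] img b'(4) by simp
  have fAA: "f ` A = A'" using fvp.linear_span_image[OF f(1), of BA] fA b b' by simp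
  have fBB: "f ` B = B'" using fvp.linear_span_image[OF f(1), of BB] fB b b' by simp
  have fM: "f ` ?M = ssum A' B'"
    using fvp.linear_span_image[OF f(1), of "BA \<union> BB"] img M span_Un_ssum[of BA' BB'] b' by simp
  have AM: "A \<subseteq> ?M" using ssum_sub1[OF B(1)] .
  have BM: "B \<subseteq> ?M" using ssum_sub2[OF A(1)] .
  have finM: "finite ?M" using A B finite_ssum by blast
  have fdim_img: "fdim (f ` U) = fdim U" if U: "fsubspace U" "U \<subseteq> ?M" for U
  proof -
    have fU: "finite U" using U finM finite_subset by blast
    have "card (f ` U) = card U" using injM U by (meson card_image inj_on_subset)
    moreover have "fsubspace (f ` U)" using fvp.linear_subspace_image[OF f(1) U(1)] .
    ultimately show ?thesis using card_subspace[OF U(1) fU] card_subspace[of "f ` U"] fU pow_q_inj[where 'a='a]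
      by (metis finite_imageI)
  qed
  have key: "f ` V \<in> Sset A' B' n c e \<longleftrightarrow> V \<in> Sset A B n c e" if V: "fsubspace V" "V \<subseteq> ?M" for V
  proof -
    have i1: "f ` (V \<inter> A) = f ` V \<inter> A'" using inj_on_image_Int[OF injM V(2) AM] fAA by simp
    have i2: "f ` (V \<inter> B) = f ` V \<inter> B'" using inj_on_image_Int[OF injM V(2) BM] fBB by simp
    have d0: "fdim (f ` V) = fdim V" using fdim_img V by blast
    have d1: "fdim (f ` V \<inter> A') = fdim (V \<inter> A)"
      using fdim_img[of "V \<inter> A"] V A i1 by (simp add: fvs.subspace_inter le_infI1)
    have d2: "fdim (f ` V \<inter> B') = fdim (V \<inter> B)"
      using fdim_img[of "V \<inter> B"] V B i2 by (simp add: fvs.subspace_inter le_infI1)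
    have "f ` V \<subseteq> ssum A' B'" using V fM by blast
    moreover have "fsubspace (f ` V)" using fvp.linear_subspace_image[OF f(1) V(1)] .
    ultimately show ?thesis unfolding Sset_def using V d0 d1 d2 by auto
  qed
  have "bij_betw (\<lambda>V. f ` V) (Sset A B n c e) (Sset A' B' n c e)"
  proof (rule bij_betw_imageI)
    show "inj_on (\<lambda>V. f ` V) (Sset A B n c e)"
      by (rule inj_onI) (use inj_on_image_eq_iff[OF injM] in \<open>auto simp: Sset_def\<close>)
    show "(\<lambda>V. f ` V) ` Sset A B n c e = Sset A' B' n c e"
    proof
      show "(\<lambda>V. f ` V) ` Sset A B n c e \<subseteq> Sset A' B' n c e"
        using key unfolding Sset_def by blast
      show "Sset A' B' n c e \<subseteq> (\<lambda>V. f ` V) ` Sset A B n c e"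
      proof
        fix V' assume V': "V' \<in> Sset A' B' n c e"
        define V where "V = ?M \<inter> f -` V'"
        have Vs: "fsubspace V" unfolding V_def
          using ssum_subspace[OF A(1) B(1)] fvp.linear_subspace_vimage[OF f(1)] V'
          unfolding Sset_def by (auto intro: fvs.subspace_inter)
        have VM: "V \<subseteq> ?M" unfolding V_def by blast
        have V'M: "V' \<subseteq> f ` ?M" using V' fM unfolding Sset_def by auto
        have fV: "f ` V = V'" unfolding V_def using V'M by blast
        have "V \<in> Sset A B n c e" using key[OF Vs VM] fV V' by simp
        then show "V' \<in> (\<lambda>V. f ` V) ` Sset A B n c e" using fV by blast
      qed
    qed
  qed
  then show ?thesis by (rule bij_betw_same_card)
qed



definition Sp :: "nat set \<Rightarrow> ('a::{field,finite}) vec set" where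
  "Sp I = {v. \<forall>i. i \<notin> I \<longrightarrow> v i = 0}"

lemma Sp_subspace: "fsubspace (Sp I)"
  unfolding fvs.subspace_def Sp_def by (auto simp: sc_def)

lemma Sp_card: assumes "finite I" shows "finite (Sp I :: ('a::{field,finite}) vec set) \<and> card (Sp I :: 'a vec set) = CARD('a) ^ card I"
proof -
  have inj: "inj_on (\<lambda>v. restrict v I) (Sp I :: 'a vec set)"
  proof (rule inj_onI)
    fix v w :: "'a vec" assume "v \<in> Sp I" "w \<in> Sp I" "restrict v I = restrict w I"
    then show "v = w" unfolding Sp_def by (auto simp: fun_eq_iff restrict_def) metis
  qed
  have img: "(\<lambda>v. restrict v I) ` (Sp I :: 'a vec set) = I \<rightarrow>\<^sub>E UNIV"
  proof
    show "(\<lambda>v. restrict v I) ` (Sp I :: 'a vec set) \<subseteq> I \<rightarrow>\<^sub>E UNIV" by auto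
    show "I \<rightarrow>\<^sub>E UNIV \<subseteq> (\<lambda>v. restrict v I) ` (Sp I :: 'a vec set)"
    proof
      fix f :: "nat \<Rightarrow> 'a" assume f: "f \<in> I \<rightarrow>\<^sub>E UNIV"
      define v where "v i = (if i \<in> I then f i else 0)" for i
      have "v \<in> Sp I" unfolding Sp_def v_def by auto
      moreover have "restrict v I = f" using f unfolding v_def by (auto simp: fun_eq_iff restrict_def PiE_def extensional_def)
      ultimately show "f \<in> (\<lambda>v. restrict v I) ` Sp I" by blast
    qed
  qed
  have fin: "finite (I \<rightarrow>\<^sub>E (UNIV :: 'a set))" using assms by (intro finite_PiE) auto
  have "finite ((\<lambda>v. restrict v I) ` (Sp I :: 'a vec set))" using img fin by simp
  then have "finite (Sp I :: 'a vec set)" using finite_imageD inj by blast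
  moreover have "card (Sp I :: 'a vec set) = card (I \<rightarrow>\<^sub>E (UNIV :: 'a set))" using card_image[OF inj] img by simp
  ultimately show ?thesis using assms by (simp add: card_PiE)
qed

lemma Sp_fdim: assumes "finite I" shows "fdim (Sp I :: ('a::{field,finite}) vec set) = card I"
  using card_subspace[OF Sp_subspace, of I] Sp_card[OF assms, where 'a='a] pow_q_inj[where 'a='a] by metis

lemma Sp_disj: "I \<inter> J = {} \<Longrightarrow> Sp I \<inter> Sp J = ({0} :: ('a::{field,finite}) vec set)"
  unfolding Sp_def by (auto simp: fun_eq_iff) blast

lemma Fk_Sp: "Fk a = Sp {..<a}"
  unfolding Fk_def Sp_def by auto

lemma B0_Sp: "{v \<in> Fk (a + b). \<forall>i<a. v i = 0} = Sp {a..<a+b}"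
  unfolding Fk_def Sp_def by auto

lemma B0_Sp2: "{v \<in> Sp {..<a + b}. \<forall>i<a. v i = 0} = (Sp {a..<a+b} :: ('a::{field,finite}) vec set)"
  unfolding Sp_def by auto

lemma Nt_eq:
  fixes A B :: "('a::{field,finite}) vec set"
  assumes A: "fsubspace A" "finite A" and B: "fsubspace B" "finite B" and AB: "A \<inter> B = {0}"
  shows "Nt TYPE('a) t (fdim A) (fdim B) c e = card (Sset A B (t + c + e) c e)"
proof -
  let ?A0 = "Sp {..<fdim A} :: 'a vec set"
  let ?B0 = "Sp {fdim A..<fdim A + fdim B} :: 'a vec set"
  have "Nt TYPE('a) t (fdim A) (fdim B) c e = card (Sset ?A0 ?B0 (t + c + e) c e)"
    unfolding Nt_def Let_def Sset_def Fk_Sp B0_Sp2 ..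
  also have "\<dots> = card (Sset A B (t + c + e) c e)"
  proof (rule iso_count[symmetric, OF A B AB Sp_subspace _ Sp_subspace _ Sp_disj])
    show "finite ?A0" using Sp_card[of "{..<fdim A}", where 'a='a] by simp
    show "finite ?B0" using Sp_card[of "{fdim A..<fdim A + fdim B}", where 'a='a] by simp
    show "{..<fdim A} \<inter> {fdim A..<fdim A + fdim B} = {}" by auto
    show "fdim A = fdim ?A0" using Sp_fdim[of "{..<fdim A}", where 'a='a] by simp
    show "fdim B = fdim ?B0" using Sp_fdim[of "{fdim A..<fdim A + fdim B}", where 'a='a] by simp
  qed
  finally show ?thesis .
qed

lemma Fk_props: "fsubspace (Fk k :: ('a::{field,finite}) vec set) \<and> finite (Fk k :: 'a vec set) \<and> fdim (Fk k :: 'a vec set) = k"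
  unfolding Fk_Sp using Sp_subspace Sp_card[of "{..<k}", where 'a='a] Sp_fdim[of "{..<k}", where 'a='a] by auto



lemma modular_ssum:
  fixes V U0 U1 :: "('a::{field,finite}) vec set"
  assumes V: "fsubspace V" and U0: "fsubspace U0" and U1: "fsubspace U1" and U01: "U0 \<subseteq> U1"
  shows "ssum V U0 \<inter> U1 = ssum (V \<inter> U1) U0"
proof
  show "ssum V U0 \<inter> U1 \<subseteq> ssum (V \<inter> U1) U0"
  proof
    fix x assume x: "x \<in> ssum V U0 \<inter> U1"
    then have "x \<in> ssum V U0" by blast
    then obtain a b where ab: "a \<in> V" "b \<in> U0" "x = a + b" by (rule ssumE)
    have "a = x - b" using ab by simp
    then have "a \<in> U1" using x ab U1 U01 fvs.subspace_diff by blast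
    then show "x \<in> ssum (V \<inter> U1) U0" using ab ssum_mem by blast
  qed
  show "ssum (V \<inter> U1) U0 \<subseteq> ssum V U0 \<inter> U1"
  proof
    fix x assume "x \<in> ssum (V \<inter> U1) U0"
    then obtain a b where ab: "a \<in> V \<inter> U1" "b \<in> U0" "x = a + b" by (rule ssumE)
    then have "x \<in> U1" using U1 U01 fvs.subspace_add by blast
    moreover have "x \<in> ssum V U0" using ab ssum_mem by blast
    ultimately show "x \<in> ssum V U0 \<inter> U1" by blast
  qed
qed

locale twosp =
  fixes U1 U2 C1 C2 :: "('a::{field,finite}) vec set"
  assumes U1: "fsubspace U1" "finite U1" and U2: "fsubspace U2" "finite U2"
    and C1: "fsubspace C1" "C1 \<subseteq> U1" "(U1 \<inter> U2) \<inter> C1 = {0}" "ssum (U1 \<inter> U2) C1 = U1"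
    and C2: "fsubspace C2" "C2 \<subseteq> U2" "(U1 \<inter> U2) \<inter> C2 = {0}" "ssum (U1 \<inter> U2) C2 = U2"
begin

abbreviation "U0 \<equiv> U1 \<inter> U2"
abbreviation "D \<equiv> ssum C1 C2"
abbreviation "W \<equiv> ssum U1 U2"

lemma U0: "fsubspace U0" "finite U0" using U1 U2 by (auto intro: fvs.subspace_inter)
lemma Ws: "fsubspace W" "finite W" using U1 U2 by (auto simp: ssum_subspace finite_ssum)
lemma fC1: "finite C1" using C1 U1 finite_subset by blast
lemma fC2: "finite C2" using C2 U2 finite_subset by blast
lemma Ds: "fsubspace D" "finite D" using C1 C2 fC1 fC2 by (auto simp: ssum_subspace finite_ssum)
lemma U1W: "U1 \<subseteq> W" using ssum_sub1[OF U2(1)] .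
lemma U2W: "U2 \<subseteq> W" using ssum_sub2[OF U1(1)] .
lemma DW: "D \<subseteq> W" using C1 C2 U1W U2W Ws by (intro ssum_le) auto
lemma C1D: "C1 \<subseteq> D" using ssum_sub1[OF C2(1)] .
lemma C2D: "C2 \<subseteq> D" using ssum_sub2[OF C1(1)] .

lemma U0D: "U0 \<inter> D = {0}"
proof -
  have "U0 \<inter> D \<subseteq> {0}"
  proof
    fix v assume v: "v \<in> U0 \<inter> D"
    then have "v \<in> D" by blast
    then obtain a b where ab: "a \<in> C1" "b \<in> C2" "v = a + b" by (rule ssumE)
    have "b = v - a" using ab by simp
    then have "b \<in> U1" using v ab C1 U1 fvs.subspace_diff by blast
    then have "b \<in> U0" using ab C2 by blast
    then have b0: "b = 0" using ab C2 by blast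
    then have "a \<in> U0" using ab v by simp
    then have "a = 0" using ab C1 by blast
    then show "v \<in> {0}" using ab b0 by simp
  qed
  then show ?thesis using U0 Ds fvs.subspace_0 by blast
qed

lemma U0DW: "ssum U0 D = W"
proof
  show "ssum U0 D \<subseteq> W" using ssum_le[OF Ws(1), of U0 D] DW U1W by blast
  show "W \<subseteq> ssum U0 D"
  proof
    fix w assume "w \<in> W"
    then obtain x1 x2 where x: "x1 \<in> U1" "x2 \<in> U2" "w = x1 + x2" by (rule ssumE)
    have "x1 \<in> ssum U0 C1" using C1 x by simp
    then obtain a1 c1 where 1: "a1 \<in> U0" "c1 \<in> C1" "x1 = a1 + c1" by (rule ssumE)
    have "x2 \<in> ssum U0 C2" using C2 x by simp
    then obtain a2 c2 where 2: "a2 \<in> U0" "c2 \<in> C2" "x2 = a2 + c2" by (rule ssumE)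
    have "a1 + a2 \<in> U0" using 1 2 U0 fvs.subspace_add by blast
    moreover have "c1 + c2 \<in> D" using 1 2 ssum_mem by blast
    moreover have "w = (a1 + a2) + (c1 + c2)" using x 1 2 by (simp add: algebra_simps)
    ultimately show "w \<in> ssum U0 D" using ssum_mem by blast
  qed
qed

definition phi :: "'a vec set \<Rightarrow> 'a vec set" where "phi V = ssum V U0 \<inter> D"

lemma phi_rel:
  assumes V: "fsubspace V" "V \<subseteq> W"
  shows "ssum U0 (phi V) = ssum V U0"
    and "card (phi V) * card (V \<inter> U0) = card V"
    and "card (phi V \<inter> C1) * card (V \<inter> U0) = card (V \<inter> U1)"
    and "card (phi V \<inter> C2) * card (V \<inter> U0) = card (V \<inter> U2)"
    and "fsubspace (phi V)" "phi V \<subseteq> D"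
proof -
  have fV: "finite V" using V Ws finite_subset by blast
  let ?P = "ssum V U0"
  have Ps: "fsubspace ?P" using V U0 by (simp add: ssum_subspace)
  have PW: "?P \<subseteq> W" using V U0 U1W Ws by (intro ssum_le) auto
  have fP: "finite ?P" using fV U0 finite_ssum by blast
  have P1: "ssum U0 (?P \<inter> D) = ?P"
    using bij_complement(1)[OF U0(1) Ds(1) U0D Ps] PW U0DW ssum_sub2[OF V(1)] by blast
  then show P1': "ssum U0 (phi V) = ?P" unfolding phi_def .
  show phs: "fsubspace (phi V)" unfolding phi_def using Ps Ds by (simp add: fvs.subspace_inter)
  show "phi V \<subseteq> D" unfolding phi_def by blast
  have fph: "finite (phi V)" unfolding phi_def using fP by simp
  have "U0 \<inter> phi V \<subseteq> {0}" using U0D unfolding phi_def by blast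
  then have "U0 \<inter> phi V = {0}" using fvs.subspace_0[OF U0(1)] fvs.subspace_0[OF phs] by blast
  then have cP: "card ?P = card U0 * card (phi V)"
    using card_ssum_direct[OF U0 phs fph] unfolding P1' by simp
  have cP2: "card ?P * card (V \<inter> U0) = card V * card U0"
    using card_ssum_int[OF V(1) fV U0] .
  have pos: "card U0 > 0" using U0 fvs.subspace_0 card_gt_0_iff by blast
  show "card (phi V) * card (V \<inter> U0) = card V"
    using cP cP2 pos by (simp add: algebra_simps)
  have gen: "card (phi V \<inter> C) * card (V \<inter> U0) = card (V \<inter> U)"
    if U: "fsubspace U" "finite U" "U0 \<subseteq> U" and C: "fsubspace C" "C \<subseteq> U" "U0 \<inter> C = {0}" "ssum U0 C = U"
      and CD: "C \<subseteq> D" for U C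
  proof -
    have mod: "?P \<inter> U = ssum (V \<inter> U) U0" by (rule modular_ssum[OF V(1) U0(1) U(1) U(3)])
    have PUs: "fsubspace (?P \<inter> U)" using Ps U by (simp add: fvs.subspace_inter)
    have s1: "U0 \<subseteq> ?P \<inter> U" using ssum_sub2[OF V(1)] U(3) by blast
    have s2: "?P \<inter> U \<subseteq> ssum U0 C" using C(4) by blast
    have e1: "ssum U0 ((?P \<inter> U) \<inter> C) = ?P \<inter> U"
      by (rule bij_complement(1)[OF U0(1) C(1) C(3) PUs s1 s2])
    have e2: "(?P \<inter> U) \<inter> C = phi V \<inter> C" unfolding phi_def using C CD by blast
    have fPC: "finite (phi V \<inter> C)" using fph by simp
    have PCs: "fsubspace (phi V \<inter> C)" using phs C by (simp add: fvs.subspace_inter)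
    have "U0 \<inter> (phi V \<inter> C) = {0}" using C(3) fvs.subspace_0[OF PCs] by blast
    then have c1: "card (?P \<inter> U) = card U0 * card (phi V \<inter> C)"
      using card_ssum_direct[OF U0 PCs fPC] e1 e2 by simp
    have VUs: "fsubspace (V \<inter> U)" using V U by (simp add: fvs.subspace_inter)
    have c2: "card (?P \<inter> U) * card (V \<inter> U \<inter> U0) = card (V \<inter> U) * card U0"
      using card_ssum_int[OF VUs _ U0] fV mod by simp
    have "V \<inter> U \<inter> U0 = V \<inter> U0" using U by blast
    then show ?thesis using c1 c2 pos by (simp add: algebra_simps)
  qed
  show "card (phi V \<inter> C1) * card (V \<inter> U0) = card (V \<inter> U1)"
    by (rule gen[OF U1 _ C1 C1D]) blast
  show "card (phi V \<inter> C2) * card (V \<inter> U0) = card (V \<inter> U2)"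
    by (rule gen[OF U2 _ C2 C2D]) blast
qed

end



lemma pow_cancel:
  assumes "a * CARD('a::{field,finite}) ^ v = CARD('a) ^ n" "v \<le> n"
  shows "a = CARD('a) ^ (n - v)"
proof -
  have "CARD('a) ^ n = CARD('a) ^ (n - v) * CARD('a) ^ v" using assms(2) by (simp add: power_add[symmetric])
  then have "a * CARD('a) ^ v = CARD('a) ^ (n - v) * CARD('a) ^ v" using assms(1) by simp
  moreover have "CARD('a) ^ v > 0" using q_ge2[where 'a='a] by simp
  ultimately show ?thesis by simp
qed

lemma gbinom_diag: "gbinom Q (int d) (int d) = 1" if "Q > 1" for Q :: real
proof -
  have "gbinom Q (int d) (int d) = (\<Prod>i<d. (Q^d - Q^i)/(Q^d - Q^i))" by (rule gbinom_nat) simp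
  also have "\<dots> = 1"
  proof (rule prod.neutral, rule ballI)
    fix i assume "i \<in> {..<d}"
    then have "Q ^ i < Q ^ d" using that by (simp add: power_strict_increasing)
    then show "(Q^d - Q^i)/(Q^d - Q^i) = 1" by simp
  qed
  finally show ?thesis .
qed

context twosp begin

lemma fsub_int: "fsubspace A \<Longrightarrow> fsubspace B \<Longrightarrow> fsubspace (A \<inter> B)"
  by (rule fvs.subspace_inter)

lemma part1:
  assumes v01: "v0 \<le> v1" and v02: "v0 \<le> v2"
  shows "real (card {V. fsubspace V \<and> V \<subseteq> W \<and> fdim V = t + v1 + v2 - v0
          \<and> fdim (V \<inter> U0) = v0 \<and> fdim (V \<inter> U1) = v1 \<and> fdim (V \<inter> U2) = v2})
      = gbinom (real CARD('a)) (int (fdim U0)) (int v0)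
        * real CARD('a) ^ ((fdim U0 - v0) * (t + v1 + v2 - 2 * v0))
        * real (card (Sset C1 C2 (t + (v1 - v0) + (v2 - v0)) (v1 - v0) (v2 - v0)))"
proof -
  define S where "S = {V. fsubspace V \<and> V \<subseteq> W \<and> fdim V = t + v1 + v2 - v0
          \<and> fdim (V \<inter> U0) = v0 \<and> fdim (V \<inter> U1) = v1 \<and> fdim (V \<inter> U2) = v2}"
  define d where "d = t + (v1 - v0) + (v2 - v0)"
  define T where "T = Sset C1 C2 d (v1 - v0) (v2 - v0)"
  define Q where "Q = CARD('a)"
  define u0 where "u0 = fdim U0"
  have dd: "t + v1 + v2 - 2 * v0 = d" "t + v1 + v2 - v0 = v0 + d" using v01 v02 unfolding d_def by auto
  have cU0: "card U0 = Q ^ u0" unfolding Q_def u0_def using card_subspace[OF U0] .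
  have fW: "\<And>V. V \<subseteq> W \<Longrightarrow> finite V" using Ws finite_subset by blast
  have cs: "\<And>V. fsubspace V \<Longrightarrow> V \<subseteq> W \<Longrightarrow> card V = Q ^ fdim V"
    unfolding Q_def using card_subspace fW by blast
  have fd: "\<And>V n. fsubspace V \<Longrightarrow> V \<subseteq> W \<Longrightarrow> fdim V = n \<longleftrightarrow> card V = Q ^ n"
    unfolding Q_def using fdim_iff_card fW by blast
  have phiT: "phi V \<in> T" if V: "V \<in> S" for V
  proof -
    have Vp: "fsubspace V" "V \<subseteq> W" "fdim V = v0 + d" "fdim (V \<inter> U0) = v0" "fdim (V \<inter> U1) = v1" "fdim (V \<inter> U2) = v2"
      using V dd unfolding S_def by auto
    note r = phi_rel[OF Vp(1,2)]
    have W0: "V \<inter> U0 \<subseteq> W" "V \<inter> U1 \<subseteq> W" "V \<inter> U2 \<subseteq> W" using Vp by auto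
    have c0: "card (V \<inter> U0) = Q ^ v0" using cs[OF fsub_int[OF Vp(1) U0(1)] W0(1)] Vp by simp
    have c1: "card (V \<inter> U1) = Q ^ v1" using cs[OF fsub_int[OF Vp(1) U1(1)] W0(2)] Vp by simp
    have c2: "card (V \<inter> U2) = Q ^ v2" using cs[OF fsub_int[OF Vp(1) U2(1)] W0(3)] Vp by simp
    have cV: "card V = Q ^ (v0 + d)" using cs[OF Vp(1,2)] Vp by simp
    have phW: "phi V \<subseteq> W" using r(6) DW by blast
    have p0: "card (phi V) = Q ^ d" using pow_cancel[of "card (phi V)" v0 "v0 + d"] r(2) c0 cV unfolding Q_def by simp
    have p1: "card (phi V \<inter> C1) = Q ^ (v1 - v0)" using pow_cancel[of "card (phi V \<inter> C1)" v0 v1] r(3) c0 c1 v01 unfolding Q_def by simp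
    have p2: "card (phi V \<inter> C2) = Q ^ (v2 - v0)" using pow_cancel[of "card (phi V \<inter> C2)" v0 v2] r(4) c0 c2 v02 unfolding Q_def by simp
    have "fdim (phi V) = d" using fd[OF r(5) phW] p0 by simp
    moreover have "fdim (phi V \<inter> C1) = v1 - v0" using fd[OF fsub_int[OF r(5) C1(1)]] phW p1 by blast
    moreover have "fdim (phi V \<inter> C2) = v2 - v0" using fd[OF fsub_int[OF r(5) C2(1)]] phW p2 by blast
    ultimately show ?thesis unfolding T_def Sset_def using r(5,6) by auto
  qed
  have fiber: "{V \<in> S. phi V = Y'} = {V. fsubspace V \<and> V \<subseteq> ssum U0 Y' \<and> fdim V = v0 + d \<and> fdim (V \<inter> U0) = v0}"
    if Y': "Y' \<in> T" for Y'
  proof -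
    have Yp: "fsubspace Y'" "Y' \<subseteq> D" "fdim Y' = d" "fdim (Y' \<inter> C1) = v1 - v0" "fdim (Y' \<inter> C2) = v2 - v0"
      using Y' unfolding T_def Sset_def by auto
    have Y'W: "Y' \<subseteq> W" using Yp DW by blast
    let ?Y = "ssum U0 Y'"
    have Ys: "fsubspace ?Y" using U0 Yp by (simp add: ssum_subspace)
    have YW: "?Y \<subseteq> W" using ssum_le[OF Ws(1), of U0 Y'] Y'W U1W by blast
    have "U0 \<inter> Y' = {0}" using U0D Yp fvs.subspace_0[OF U0(1)] fvs.subspace_0[OF Yp(1)] by blast
    then have cY: "card ?Y = Q ^ (u0 + d)"
      using card_ssum_direct[OF U0 Yp(1)] fW[OF Y'W] cU0 cs[OF Yp(1) Y'W] Yp by (simp add: power_add)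
    show ?thesis
    proof (rule set_eqI, rule iffI)
      fix V assume "V \<in> {V \<in> S. phi V = Y'}"
      then have V: "V \<in> S" "phi V = Y'" by auto
      have Vp: "fsubspace V" "V \<subseteq> W" "fdim V = v0 + d" "fdim (V \<inter> U0) = v0"
        using V dd unfolding S_def by auto
      have "V \<subseteq> ssum V U0" using ssum_sub1[OF U0(1)] .
      also have "\<dots> = ?Y" using phi_rel(1)[OF Vp(1,2)] V by simp
      finally show "V \<in> {V. fsubspace V \<and> V \<subseteq> ?Y \<and> fdim V = v0 + d \<and> fdim (V \<inter> U0) = v0}"
        using Vp by auto
    next
      fix V assume "V \<in> {V. fsubspace V \<and> V \<subseteq> ?Y \<and> fdim V = v0 + d \<and> fdim (V \<inter> U0) = v0}"
      then have Vp: "fsubspace V" "V \<subseteq> ?Y" "fdim V = v0 + d" "fdim (V \<inter> U0) = v0" by auto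
      have VW: "V \<subseteq> W" using Vp YW by blast
      note r = phi_rel[OF Vp(1) VW]
      have fV: "finite V" using fW VW .
      have W0: "V \<inter> U0 \<subseteq> W" "V \<inter> U1 \<subseteq> W" "V \<inter> U2 \<subseteq> W" using VW by auto
      have c0: "card (V \<inter> U0) = Q ^ v0" using cs[OF fsub_int[OF Vp(1) U0(1)] W0(1)] Vp by simp
      have cV: "card V = Q ^ (v0 + d)" using cs[OF Vp(1) VW] Vp by simp
      let ?P = "ssum V U0"
      have PY: "?P \<subseteq> ?Y" using ssum_le[OF Ys Vp(2)] ssum_sub1[OF Yp(1)] by blast
      have "card ?P * card (V \<inter> U0) = card V * card U0" using card_ssum_int[OF Vp(1) fV U0] .
      then have "card ?P * Q ^ v0 = Q ^ (u0 + d) * Q ^ v0" using c0 cV cU0 by (simp add: power_add algebra_simps)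
      then have "card ?P = card ?Y" using cY Q_def q_ge2[where 'a='a] by simp
      then have PeY: "?P = ?Y" using PY fW[OF YW] by (intro subspace_card_eq) auto
      have ph: "phi V = Y'" unfolding phi_def PeY by (rule bij_complement(2)[OF U0(1) Ds(1) U0D Yp(2)])
      have y1: "card (Y' \<inter> C1) = Q ^ (v1 - v0)"
        using fd[OF fsub_int[OF Yp(1) C1(1)]] Y'W Yp by blast
      have y2: "card (Y' \<inter> C2) = Q ^ (v2 - v0)"
        using fd[OF fsub_int[OF Yp(1) C2(1)]] Y'W Yp by blast
      have "card (V \<inter> U1) = Q ^ v1" using r(3) ph y1 c0 v01 by (simp add: power_add[symmetric])
      then have d1: "fdim (V \<inter> U1) = v1" using fd[OF fsub_int[OF Vp(1) U1(1)] W0(2)] by simp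
      have "card (V \<inter> U2) = Q ^ v2" using r(4) ph y2 c0 v02 by (simp add: power_add[symmetric])
      then have d2: "fdim (V \<inter> U2) = v2" using fd[OF fsub_int[OF Vp(1) U2(1)] W0(3)] by simp
      show "V \<in> {V \<in> S. phi V = Y'}" unfolding S_def using Vp VW d1 d2 dd ph by auto
    qed
  qed
  define X where "X = {X0. fsubspace X0 \<and> X0 \<subseteq> U0 \<and> fdim X0 = v0}"
  have cX: "real (card X) = gbinom (real Q) (int u0) (int v0)"
  proof -
    have e: "X = {V. fsubspace V \<and> V \<subseteq> U0 \<and> fdim V = v0 \<and> V \<inter> {0} = {0}}"
      unfolding X_def using fvs.subspace_0 by blast
    have "fdim ({0} :: 'a vec set) = 0" using fdim_iff_card[OF zero_subspace, of 0] by simp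
    then show ?thesis unfolding e Q_def u0_def
      using G_count[OF zero_subspace _ U0, of v0] fvs.subspace_0[OF U0(1)] by simp
  qed
  have finX: "finite X"
  proof -
    have "X \<subseteq> Pow U0" unfolding X_def by blast
    moreover have "finite (Pow U0)" using U0(2) by (simp only: finite_Pow_iff)
    ultimately show ?thesis by (rule finite_subset)
  qed
  have fibc: "real (card {V \<in> S. phi V = Y'}) = gbinom (real Q) (int u0) (int v0) * real Q ^ ((u0 - v0) * d)"
    if Y': "Y' \<in> T" for Y'
  proof -
    have Yp: "fsubspace Y'" "Y' \<subseteq> D" "fdim Y' = d"
      using Y' unfolding T_def Sset_def by auto
    have Y'W: "Y' \<subseteq> W" using Yp DW by blast
    let ?Y = "ssum U0 Y'"
    have Ys: "fsubspace ?Y" using U0 Yp by (simp add: ssum_subspace)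
    have YW: "?Y \<subseteq> W" using ssum_le[OF Ws(1), of U0 Y'] Y'W U1W by blast
    have fY: "finite ?Y" using fW YW .
    have "U0 \<inter> Y' = {0}" using U0D Yp fvs.subspace_0[OF U0(1)] fvs.subspace_0[OF Yp(1)] by blast
    then have "card ?Y = Q ^ (u0 + d)"
      using card_ssum_direct[OF U0 Yp(1)] fW[OF Y'W] cU0 cs[OF Yp(1) Y'W] Yp by (simp add: power_add)
    then have dY: "fdim ?Y = u0 + d" using fd[OF Ys YW] by simp
    have U0Y: "U0 \<subseteq> ?Y" using ssum_sub1[OF Yp(1)] .
    define H where "H X0 = {V. fsubspace V \<and> V \<subseteq> ?Y \<and> fdim V = v0 + d \<and> V \<inter> U0 = X0}" for X0
    have U: "{V \<in> S. phi V = Y'} = (\<Union>X0\<in>X. H X0)"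
    proof -
      have "{V. fsubspace V \<and> V \<subseteq> ?Y \<and> fdim V = v0 + d \<and> fdim (V \<inter> U0) = v0} = (\<Union>X0\<in>X. H X0)"
        unfolding X_def H_def using U0 by (auto intro: fvs.subspace_inter)
      then show ?thesis using fiber[OF Y'] by simp
    qed
    have finH: "finite (H X0)" for X0 unfolding H_def by (rule finite_subset[of _ "Pow ?Y"]) (use fY in auto)
    have cH: "real (card (H X0)) = real Q ^ ((u0 - v0) * d)" if X0: "X0 \<in> X" for X0
    proof -
      have Xp: "fsubspace X0" "X0 \<subseteq> U0" "fdim X0 = v0" using X0 unfolding X_def by auto
      have "real (card (H X0)) = real CARD('a) ^ ((fdim U0 - fdim X0) * (v0 + d - fdim X0))
          * gbinom (real CARD('a)) (int (fdim ?Y - fdim U0)) (int (v0 + d - fdim X0))"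
        unfolding H_def by (rule H_count[OF Xp(1) U0(1) Ys fY Xp(2) U0Y]) (use Xp in simp)
      also have "\<dots> = real Q ^ ((u0 - v0) * d) * gbinom (real Q) (int d) (int d)"
        using Xp dY unfolding Q_def u0_def by simp
      also have "gbinom (real Q) (int d) (int d) = 1" using q_ge2[where 'a='a] unfolding Q_def
        by (intro gbinom_diag) simp
      finally show ?thesis by simp
    qed
    have "card {V \<in> S. phi V = Y'} = (\<Sum>X0\<in>X. card (H X0))"
      unfolding U by (rule card_UN_disjoint[OF finX]) (use finH in \<open>auto simp: H_def\<close>)
    then have "real (card {V \<in> S. phi V = Y'}) = (\<Sum>X0\<in>X. real (card (H X0)))" by simp
    also have "\<dots> = real (card X) * real Q ^ ((u0 - v0) * d)" using cH by simp
    finally show ?thesis using cX by simp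
  qed
  have finS: "finite S" unfolding S_def by (rule finite_subset[of _ "Pow W"]) (use Ws in auto)
  have finT: "finite T" unfolding T_def Sset_def by (rule finite_subset[of _ "Pow (ssum C1 C2)"]) (use Ds in auto)
  have US: "S = (\<Union>Y'\<in>T. {V \<in> S. phi V = Y'})" using phiT by blast
  have "card S = (\<Sum>Y'\<in>T. card {V \<in> S. phi V = Y'})"
    by (subst US, rule card_UN_disjoint[OF finT]) (use finS in auto)
  then have "real (card S) = (\<Sum>Y'\<in>T. real (card {V \<in> S. phi V = Y'}))" by simp
  also have "\<dots> = real (card T) * (gbinom (real Q) (int u0) (int v0) * real Q ^ ((u0 - v0) * d))"
    using fibc by simp
  finally show ?thesis unfolding S_def T_def Q_def u0_def dd(1) d_def by (simp add: algebra_simps)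
qed

end



context twosp begin

lemma fdimW: "fdim W + fdim U0 = fdim U1 + fdim U2"
proof -
  have "card W * card U0 = card U1 * card U2" using card_ssum_int[OF U1 U2] .
  then have "CARD('a) ^ (fdim W + fdim U0) = CARD('a) ^ (fdim U1 + fdim U2)"
    using card_subspace[OF Ws] card_subspace[OF U0] card_subspace[OF U1] card_subspace[OF U2]
    by (simp add: power_add)
  then show ?thesis using pow_q_inj[where 'a='a] by blast
qed

lemma dimU0: "fdim U0 \<le> fdim U1" "fdim U0 \<le> fdim U2"
proof -
  have "card U0 \<le> card U1" "card U0 \<le> card U2" using U1 U2 by (auto intro: card_mono)
  then show "fdim U0 \<le> fdim U1" "fdim U0 \<le> fdim U2"
    using card_subspace[OF U0] card_subspace[OF U1] card_subspace[OF U2] pow_q_le[where 'a='a] by auto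
qed

lemma range_bound:
  assumes X: "fsubspace X" "X \<subseteq> W" and d0: "fdim (X \<inter> U0) = v0" and d1: "fdim (X \<inter> U1) = v1"
    and d2: "fdim (X \<inter> U2) = v2" and v0u: "v0 \<le> fdim U0"
  shows "v1 + v2 \<le> fdim X + v0" "fdim X + v0 \<le> fdim U2 + v1" "fdim X + v0 \<le> fdim U1 + v2"
proof -
  have fX: "finite X" using X Ws finite_subset by blast
  have s0: "fsubspace (X \<inter> U0)" "finite (X \<inter> U0)" using X U0 fX by (auto intro: fvs.subspace_inter)
  have s1: "fsubspace (X \<inter> U1)" "finite (X \<inter> U1)" using X U1 fX by (auto intro: fvs.subspace_inter)
  have s2: "fsubspace (X \<inter> U2)" "finite (X \<inter> U2)" using X U2 fX by (auto intro: fvs.subspace_inter)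
  have c0: "card (X \<inter> U0) = CARD('a) ^ v0" using card_subspace[OF s0] d0 by simp
  have c1: "card (X \<inter> U1) = CARD('a) ^ v1" using card_subspace[OF s1] d1 by simp
  have c2: "card (X \<inter> U2) = CARD('a) ^ v2" using card_subspace[OF s2] d2 by simp
  have cX: "card X = CARD('a) ^ fdim X" using card_subspace[OF X(1) fX] .
  have e: "X \<inter> U1 \<inter> (X \<inter> U2) = X \<inter> U0" by blast
  have "card (ssum (X \<inter> U1) (X \<inter> U2)) * card (X \<inter> U0) = card (X \<inter> U1) * card (X \<inter> U2)"
    using card_ssum_int[OF s1 s2] e by simp
  moreover have "card (ssum (X \<inter> U1) (X \<inter> U2)) \<le> card X"
    using ssum_le[OF X(1), of "X \<inter> U1" "X \<inter> U2"] fX by (intro card_mono) auto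
  ultimately have "CARD('a) ^ v1 * CARD('a) ^ v2 \<le> CARD('a) ^ fdim X * CARD('a) ^ v0"
    using c0 c1 c2 cX by (metis mult_le_mono1)
  then show "v1 + v2 \<le> fdim X + v0" using pow_q_le[where 'a='a] by (simp add: power_add[symmetric])
  have gen: "fdim X + fdim Ui \<le> fdim W + vi"
    if Ui: "fsubspace Ui" "finite Ui" "Ui \<subseteq> W" and si: "card (X \<inter> Ui) = CARD('a) ^ vi" for Ui vi
  proof -
    have "card (ssum X Ui) * card (X \<inter> Ui) = card X * card Ui" using card_ssum_int[OF X(1) fX Ui(1,2)] .
    moreover have "card (ssum X Ui) \<le> card W" using ssum_le[OF Ws(1) X(2) Ui(3)] Ws by (intro card_mono) auto
    ultimately have "CARD('a) ^ fdim X * CARD('a) ^ fdim Ui \<le> CARD('a) ^ fdim W * CARD('a) ^ vi"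
      using si cX card_subspace[OF Ui(1,2)] card_subspace[OF Ws] by (metis mult_le_mono1)
    then show ?thesis using pow_q_le[where 'a='a] by (simp add: power_add[symmetric])
  qed
  have g1: "fdim X + fdim U1 \<le> fdim W + v1" using gen[OF U1 U1W c1] .
  have g2: "fdim X + fdim U2 \<le> fdim W + v2" using gen[OF U2 U2W c2] .
  show "fdim X + v0 \<le> fdim U2 + v1" using g1 fdimW v0u by linarith
  show "fdim X + v0 \<le> fdim U1 + v2" using g2 fdimW v0u by linarith
qed

end



context twosp begin

lemma part2:
  assumes E: "fsubspace E" "finite E" "W \<subseteq> E"
    and v: "v0 \<le> fdim U0" "v0 \<le> v1" "v1 \<le> fdim U1" "v0 \<le> v2" "v2 \<le> fdim U2"
  shows "real (card {V. fsubspace V \<and> V \<subseteq> E \<and> fdim V = l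
          \<and> fdim (V \<inter> U0) = v0 \<and> fdim (V \<inter> U1) = v1 \<and> fdim (V \<inter> U2) = v2})
      = (\<Sum>s = 0..min (fdim U1 - v1) (fdim U2 - v2).
           real (CARD('a)) powi
             ((int (fdim U1 - v1) + int (fdim U2 - v2) - int (fdim U0 - v0) - int s)
              * (int l - int s - int v1 - int v2 + int v0))
         * gbinom (real (CARD('a))) (int (fdim E) - int (fdim U1) - int (fdim U2) + int (fdim U0))
                  (int l - int s - int v1 - int v2 + int v0)
         * real (card {V. fsubspace V \<and> V \<subseteq> W \<and> fdim V = s + v1 + v2 - v0
              \<and> fdim (V \<inter> U0) = v0 \<and> fdim (V \<inter> U1) = v1 \<and> fdim (V \<inter> U2) = v2}))"
proof -
  define M where "M = min (fdim U1 - v1) (fdim U2 - v2)"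
  define Sl where "Sl = {V. fsubspace V \<and> V \<subseteq> E \<and> fdim V = l
          \<and> fdim (V \<inter> U0) = v0 \<and> fdim (V \<inter> U1) = v1 \<and> fdim (V \<inter> U2) = v2}"
  define Ss where "Ss s = {V. fsubspace V \<and> V \<subseteq> W \<and> fdim V = s + v1 + v2 - v0
              \<and> fdim (V \<inter> U0) = v0 \<and> fdim (V \<inter> U1) = v1 \<and> fdim (V \<inter> U2) = v2}" for s
  define fib where "fib X = {V. fsubspace V \<and> V \<subseteq> E \<and> fdim V = l \<and> V \<inter> W = X}" for X
  define f where "f s = real (CARD('a)) powi
             ((int (fdim U1 - v1) + int (fdim U2 - v2) - int (fdim U0 - v0) - int s)
              * (int l - int s - int v1 - int v2 + int v0))
         * gbinom (real (CARD('a))) (int (fdim E) - int (fdim U1) - int (fdim U2) + int (fdim U0))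
                  (int l - int s - int v1 - int v2 + int v0)" for s
  define XX where "XX = (\<Union>s\<in>{0..M}. Ss s)"
  have U0W: "U0 \<subseteq> W" using U1W by blast
  have finE: "\<And>V. V \<subseteq> E \<Longrightarrow> finite V" using E finite_subset by blast
  have finPW: "finite (Pow W)" using Ws by simp
  have finSs: "finite (Ss s)" for s unfolding Ss_def by (rule finite_subset[OF _ finPW]) blast
  have finXX: "finite XX" unfolding XX_def using finSs by blast
  have finfib: "finite (fib X)" for X
    unfolding fib_def by (rule finite_subset[of _ "Pow E"]) (use E in auto)
  have U: "Sl = (\<Union>X\<in>XX. fib X)"
  proof (rule set_eqI, rule iffI)
    fix V assume "V \<in> Sl"
    then have Vp: "fsubspace V" "V \<subseteq> E" "fdim V = l" "fdim (V \<inter> U0) = v0" "fdim (V \<inter> U1) = v1" "fdim (V \<inter> U2) = v2"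
      unfolding Sl_def by auto
    let ?X = "V \<inter> W"
    have Xs: "fsubspace ?X" using Vp Ws by (simp add: fvs.subspace_inter)
    have i: "?X \<inter> U0 = V \<inter> U0" "?X \<inter> U1 = V \<inter> U1" "?X \<inter> U2 = V \<inter> U2" using U0W U1W U2W by auto
    note rb = range_bound[OF Xs _ _ _ _ v(1), of v1 v2]
    have b: "v1 + v2 \<le> fdim ?X + v0" "fdim ?X + v0 \<le> fdim U2 + v1" "fdim ?X + v0 \<le> fdim U1 + v2"
      using rb i Vp by auto
    define s where "s = fdim ?X + v0 - v1 - v2"
    have sM: "s \<in> {0..M}" unfolding s_def M_def using b v by auto
    have "fdim ?X = s + v1 + v2 - v0" unfolding s_def using b v by auto
    then have "?X \<in> Ss s" unfolding Ss_def using Xs i Vp by auto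
    then have "?X \<in> XX" unfolding XX_def using sM by blast
    moreover have "V \<in> fib ?X" unfolding fib_def using Vp by auto
    ultimately show "V \<in> (\<Union>X\<in>XX. fib X)" by blast
  next
    fix V assume "V \<in> (\<Union>X\<in>XX. fib X)"
    then obtain X s where X: "X \<in> Ss s" "V \<in> fib X" unfolding XX_def by blast
    then have Vp: "fsubspace V" "V \<subseteq> E" "fdim V = l" "V \<inter> W = X" unfolding fib_def by auto
    have Xp: "fdim (X \<inter> U0) = v0" "fdim (X \<inter> U1) = v1" "fdim (X \<inter> U2) = v2" using X(1) unfolding Ss_def by auto
    have i: "X \<inter> U0 = V \<inter> U0" "X \<inter> U1 = V \<inter> U1" "X \<inter> U2 = V \<inter> U2" using U0W U1W U2W Vp(4) by auto
    show "V \<in> Sl" unfolding Sl_def using Vp Xp i by auto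
  qed
  have c1: "card Sl = (\<Sum>X\<in>XX. card (fib X))"
    unfolding U by (rule card_UN_disjoint[OF finXX]) (use finfib in \<open>auto simp: fib_def\<close>)
  have c2: "(\<Sum>X\<in>XX. real (card (fib X))) = (\<Sum>s\<in>{0..M}. \<Sum>X\<in>Ss s. real (card (fib X)))"
  proof -
    have disj: "\<forall>i\<in>{0..M}. \<forall>j\<in>{0..M}. i \<noteq> j \<longrightarrow> Ss i \<inter> Ss j = {}"
    proof (intro ballI impI)
      fix i j :: nat assume ij: "i \<noteq> j"
      show "Ss i \<inter> Ss j = {}"
      proof (rule ccontr)
        assume "Ss i \<inter> Ss j \<noteq> {}"
        then obtain X where "X \<in> Ss i" "X \<in> Ss j" by blast
        then have "fdim X = i + v1 + v2 - v0" "fdim X = j + v1 + v2 - v0" unfolding Ss_def by auto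
        then show False using ij v(2) by linarith
      qed
    qed
    show ?thesis unfolding XX_def by (rule sum.UNION_disjoint) (use finSs disj in auto)
  qed
  have c3: "real (card (fib X)) = f s" if X: "X \<in> Ss s" for X s
  proof -
    have Xp: "fsubspace X" "X \<subseteq> W" "fdim X = s + v1 + v2 - v0" using X unfolding Ss_def by auto
    have fX: "finite X" using Xp Ws finite_subset by blast
    have xW: "fdim X \<le> fdim W"
      using card_mono[OF Ws(2) Xp(2)] card_subspace[OF Xp(1) fX] card_subspace[OF Ws] pow_q_le[where 'a='a] by simp
    have WE: "fdim W \<le> fdim E"
      using card_mono[OF E(2) E(3)] card_subspace[OF E(1,2)] card_subspace[OF Ws] pow_q_le[where 'a='a] by simp
    note fW = fdimW
    have du: "fdim U0 \<le> fdim U1" "fdim U0 \<le> fdim U2" using dimU0 .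
    show ?thesis
    proof (cases "fdim X \<le> l")
      case True
      have "real (card (fib X)) = real CARD('a) ^ ((fdim W - fdim X) * (l - fdim X))
          * gbinom (real CARD('a)) (int (fdim E - fdim W)) (int (l - fdim X))"
        unfolding fib_def by (rule H_count[OF Xp(1) Ws(1) E(1,2) Xp(2) E(3) True])
      moreover have "int (fdim E - fdim W) = int (fdim E) - int (fdim U1) - int (fdim U2) + int (fdim U0)"
        using WE fW by linarith
      moreover have "int (l - fdim X) = int l - int s - int v1 - int v2 + int v0"
        using True Xp(3) v by linarith
      moreover have "int (fdim U1 - v1) + int (fdim U2 - v2) - int (fdim U0 - v0) - int s = int (fdim W - fdim X)"
        using xW Xp(3) fW v du by linarith
      ultimately show ?thesis unfolding f_def
        by (metis of_nat_mult power_int_of_nat)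
    next
      case False
      have "fib X = {}"
      proof (rule ccontr)
        assume "fib X \<noteq> {}"
        then obtain V where "V \<in> fib X" by blast
        then have Vp: "fsubspace V" "V \<subseteq> E" "fdim V = l" "V \<inter> W = X" unfolding fib_def by auto
        have fV: "finite V" using finE Vp by blast
        have "card X \<le> card V" using Vp fV by (intro card_mono) auto
        then have "fdim X \<le> l" using card_subspace[OF Xp(1) fX] card_subspace[OF Vp(1) fV] Vp pow_q_le[where 'a='a] by simp
        then show False using False by simp
      qed
      moreover have "int l - int s - int v1 - int v2 + int v0 < 0" using False Xp(3) v by linarith
      ultimately show ?thesis unfolding f_def gbinom_def by simp
    qed
  qed
  have "real (card Sl) = (\<Sum>s\<in>{0..M}. \<Sum>X\<in>Ss s. real (card (fib X)))"
    using c1 c2 by simp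
  also have "\<dots> = (\<Sum>s\<in>{0..M}. f s * real (card (Ss s)))"
    using c3 by (intro sum.cong) auto
  finally show ?thesis unfolding Sl_def f_def Ss_def M_def by simp
qed

end



theorem lemma3p4:
  fixes U1 U2 :: "(nat \<Rightarrow> 'a::{field,finite}) set"
    and k u0 u1 u2 t v0 v1 v2 l :: nat
  assumes "fsubspace U1" "U1 \<subseteq> Fk k" "fsubspace U2" "U2 \<subseteq> Fk k"
    and "fdim U1 = u1" "fdim U2 = u2" "fdim (U1 \<inter> U2) = u0"
    and "u0 < min u1 u2"
    and "v0 \<le> u0" "v0 \<le> v1" "v1 \<le> u1" "v0 \<le> v2" "v2 \<le> u2"
  shows
   "real (card {V. fsubspace V \<and> V \<subseteq> ssum U1 U2 \<and> fdim V = t + v1 + v2 - v0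
          \<and> fdim (V \<inter> (U1 \<inter> U2)) = v0 \<and> fdim (V \<inter> U1) = v1 \<and> fdim (V \<inter> U2) = v2})
      = gbinom (real (CARD('a))) (int u0) (int v0)
        * real (CARD('a)) ^ ((u0 - v0) * (t + v1 + v2 - 2 * v0))
        * real (Nt TYPE('a) t (u1 - u0) (u2 - u0) (v1 - v0) (v2 - v0))
    \<and>
    real (card {V. fsubspace V \<and> V \<subseteq> Fk k \<and> fdim V = l
          \<and> fdim (V \<inter> (U1 \<inter> U2)) = v0 \<and> fdim (V \<inter> U1) = v1 \<and> fdim (V \<inter> U2) = v2})
      = (\<Sum>s = 0..min (u1 - v1) (u2 - v2).
           real (CARD('a)) powi
             ((int (u1 - v1) + int (u2 - v2) - int (u0 - v0) - int s)
              * (int l - int s - int v1 - int v2 + int v0))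
         * gbinom (real (CARD('a))) (int k - int u1 - int u2 + int u0)
                  (int l - int s - int v1 - int v2 + int v0)
         * real (card {V. fsubspace V \<and> V \<subseteq> ssum U1 U2 \<and> fdim V = s + v1 + v2 - v0
              \<and> fdim (V \<inter> (U1 \<inter> U2)) = v0 \<and> fdim (V \<inter> U1) = v1 \<and> fdim (V \<inter> U2) = v2}))"
proof -
  note Fk = Fk_props[where 'a='a and k=k]
  have fU1: "finite U1" using assms(2) Fk finite_subset by blast
  have fU2: "finite U2" using assms(4) Fk finite_subset by blast
  have sU0: "fsubspace (U1 \<inter> U2)" using assms(1,3) by (rule fvs.subspace_inter)
  obtain C1 where C1: "fsubspace C1" "C1 \<subseteq> U1" "(U1 \<inter> U2) \<inter> C1 = {0}" "ssum (U1 \<inter> U2) C1 = U1"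
    using complement_exists[OF sU0 assms(1) fU1] by blast
  obtain C2 where C2: "fsubspace C2" "C2 \<subseteq> U2" "(U1 \<inter> U2) \<inter> C2 = {0}" "ssum (U1 \<inter> U2) C2 = U2"
    using complement_exists[OF sU0 assms(3) fU2] by blast
  interpret twosp U1 U2 C1 C2
    by unfold_locales (use assms(1,3) fU1 fU2 C1 C2 in auto)
  have C12: "C1 \<inter> C2 = {0}" using C1 C2 by blast
  have dC1: "fdim C1 = u1 - u0"
  proof -
    have "card U1 = card U0 * card C1" using card_ssum_direct[OF U0 C1(1) fC1 C1(3)] C1(4) by simp
    then have "CARD('a) ^ u1 = CARD('a) ^ (u0 + fdim C1)"
      using card_subspace[OF U1] card_subspace[OF U0] card_subspace[OF C1(1) fC1] assms(5,7)
      by (simp add: power_add)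
    then show ?thesis using pow_q_inj[where 'a='a] by simp
  qed
  have dC2: "fdim C2 = u2 - u0"
  proof -
    have "card U2 = card U0 * card C2" using card_ssum_direct[OF U0 C2(1) fC2 C2(3)] C2(4) by simp
    then have "CARD('a) ^ u2 = CARD('a) ^ (u0 + fdim C2)"
      using card_subspace[OF U2] card_subspace[OF U0] card_subspace[OF C2(1) fC2] assms(6,7)
      by (simp add: power_add)
    then show ?thesis using pow_q_inj[where 'a='a] by simp
  qed
  have Nt: "Nt TYPE('a) t (u1 - u0) (u2 - u0) (v1 - v0) (v2 - v0)
      = card (Sset C1 C2 (t + (v1 - v0) + (v2 - v0)) (v1 - v0) (v2 - v0))"
    using Nt_eq[OF C1(1) fC1 C2(1) fC2 C12, of t "v1 - v0" "v2 - v0"] dC1 dC2 by simp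
  have part_i: "real (card {V. fsubspace V \<and> V \<subseteq> ssum U1 U2 \<and> fdim V = t + v1 + v2 - v0
          \<and> fdim (V \<inter> (U1 \<inter> U2)) = v0 \<and> fdim (V \<inter> U1) = v1 \<and> fdim (V \<inter> U2) = v2})
      = gbinom (real (CARD('a))) (int u0) (int v0)
        * real (CARD('a)) ^ ((u0 - v0) * (t + v1 + v2 - 2 * v0))
        * real (Nt TYPE('a) t (u1 - u0) (u2 - u0) (v1 - v0) (v2 - v0))"
    unfolding Nt using part1[OF assms(10,12), of t] assms(7) by simp
  have WE: "ssum U1 U2 \<subseteq> Fk k" using ssum_le[of "Fk k" U1 U2] Fk assms(2,4) by blast
  have part_ii: "real (card {V. fsubspace V \<and> V \<subseteq> Fk k \<and> fdim V = l
          \<and> fdim (V \<inter> (U1 \<inter> U2)) = v0 \<and> fdim (V \<inter> U1) = v1 \<and> fdim (V \<inter> U2) = v2})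
      = (\<Sum>s = 0..min (u1 - v1) (u2 - v2).
           real (CARD('a)) powi
             ((int (u1 - v1) + int (u2 - v2) - int (u0 - v0) - int s)
              * (int l - int s - int v1 - int v2 + int v0))
         * gbinom (real (CARD('a))) (int k - int u1 - int u2 + int u0)
                  (int l - int s - int v1 - int v2 + int v0)
         * real (card {V. fsubspace V \<and> V \<subseteq> ssum U1 U2 \<and> fdim V = s + v1 + v2 - v0
              \<and> fdim (V \<inter> (U1 \<inter> U2)) = v0 \<and> fdim (V \<inter> U1) = v1 \<and> fdim (V \<inter> U2) = v2}))"
    using part2[of "Fk k" v0 v1 v2 l] Fk WE assms(5-13) by simp
  show ?thesis using part_i part_ii by blast
qed


end
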